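(* Let $\mathcal P\subseteq\mathcal G$ be a pseudo-torsion class and $\mathcal Q=\mathcal P^\perp$. For every $M\in\mathcal G$ there is a unique strict subobject $tM$ of $M$ such that $tM\in\mathcal P$ and $fM:=M/tM\in\mathcal Q$; thus $0\to tM\to M\to fM\to 0$ is a strict exact sequence. Moreover, for every strict morphism $\varphi:M\to N$ with $M,N\in\mathcal G$, $\varphi(tM)\subseteq tN$, and the induced maps $tM\to tN$ and $fM\to fN$ are strict morphisms making the evident diagram with the two strict exact sequences commute.
   Context: Let $\Lambda$ be a finite dimensional algebra over a field and $\mathrm{mod}\text-\Lambda$ the category of finitely generated right $\Lambda$-modules. Fix a torsion class $\mathcal G\subseteq\mathrm{mod}\text-\Lambda$, i.e. a class of modules closed under isomorphisms, extensions and quotients. For $B\in\mathcal G$, a subobject of $B$ is a submodule of $B$ that lies in $\mathcal G$. A subobject $A\subseteq B$ is a strict subobject if $A\cap B'\in\mathcal G$ for every subobject $B'$ of $B$. A strict quotient of $B$ is $B/A$ with $A$ a strict subobject. A short exact sequence $0\to A\to B\to C\to0$ with $A,B,C\in\mathcal G$ is strict exact (and $B$ a strict extension of $A$ by $C$) if the image of $A$ is a strict subobject of $B$. A strict morphism is a homomorphism $f:A\to B$ with $A,B\in\mathcal G$ such that $\ker f\in\mathcal G$ is a strict subobject of $A$ and $\operatorname{im} f$ is a strict subobject of $B$. A pseudo-torsion class is a nonempty class $\mathcal P\subseteq\mathcal G$ closed under strict quotients and strict extensions. For $\mathcal X\subseteq\mathcal G$, $\mathcal X^\perp$ is the class of $Y\in\mathcal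 G$ such that every strict morphism $X\to Y$ with $X\in\mathcal X$ is zero. *)

theory Defs
  imports Main
begin

(* Right modules over a ring Lambda, where Lambda is the type 'r (carrier UNIV).
   Modules are structures whose carrier is a subset of a fixed universe type. *)

record ('m, 'r) rmod =
  mcarr :: "'m set"
  madd  :: "'m \<Rightarrow> 'm \<Rightarrow> 'm"
  mzero :: "'m"
  mact  :: "'m \<Rightarrow> 'r \<Rightarrow> 'm"

(* Universe of carriers: large enough to contain an isomorphic copy of every
   finitely generated right module over 'r *)
type_synonym 'r umod = "('r \<times> nat, 'r) rmod"

definition fd_algebra :: "('k::field \<Rightarrow> 'r::ring_1) \<Rightarrow> bool" where
  "fd_algebra \<iota> \<longleftrightarrow>
     \<iota> 1 = 1 \<and> (\<forall>a b. \<iota> (a + b) = \<iota> a + \<iota> b) \<and> (\<forall>a b. \<iota> (a * b) = \<iota> a * \<iota> b) \<and>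
     (\<forall>a x. \<iota> a * x = x * \<iota> a) \<and>
     (\<exists>B. finite B \<and> (\<forall>x. \<exists>c. x = (\<Sum>b\<in>B. \<iota> (c b) * b)))"

definition rmodule :: "('m, 'r::ring_1) rmod \<Rightarrow> bool" where
  "rmodule M \<longleftrightarrow>
     mzero M \<in> mcarr M \<and>
     (\<forall>x\<in>mcarr M. \<forall>y\<in>mcarr M. madd M x y \<in> mcarr M) \<and>
     (\<forall>x\<in>mcarr M. \<forall>r. mact M x r \<in> mcarr M) \<and>
     (\<forall>x\<in>mcarr M. \<forall>y\<in>mcarr M. \<forall>z\<in>mcarr M. madd M (madd M x y) z = madd M x (madd M y z)) \<and>
     (\<forall>x\<in>mcarr M. \<forall>y\<in>mcarr M. madd M x y = madd M y x) \<and>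
     (\<forall>x\<in>mcarr M. madd M (mzero M) x = x) \<and>
     (\<forall>x\<in>mcarr M. \<exists>y\<in>mcarr M. madd M x y = mzero M) \<and>
     (\<forall>x\<in>mcarr M. \<forall>y\<in>mcarr M. \<forall>r. mact M (madd M x y) r = madd M (mact M x r) (mact M y r)) \<and>
     (\<forall>x\<in>mcarr M. \<forall>r s. mact M x (r + s) = madd M (mact M x r) (mact M x s)) \<and>
     (\<forall>x\<in>mcarr M. \<forall>r s. mact M x (r * s) = mact M (mact M x r) s) \<and>
     (\<forall>x\<in>mcarr M. mact M x 1 = x)"

definition submod :: "('m, 'r) rmod \<Rightarrow> 'm set \<Rightarrow> bool" where
  "submod M A \<longleftrightarrow> A \<subseteq> mcarr M \<and> mzero M \<in> A \<and>
     (\<forall>x\<in>A. \<forall>y\<in>A. madd M x y \<in> A) \<and> (\<forall>x\<in>A. \<forall>r. mact M x r \<in> A)"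

definition restr :: "('m, 'r) rmod \<Rightarrow> 'm set \<Rightarrow> ('m, 'r) rmod" where
  "restr M A = M\<lparr>mcarr := A\<rparr>"

definition fingen :: "('m, 'r) rmod \<Rightarrow> bool" where
  "fingen M \<longleftrightarrow> (\<exists>S. finite S \<and> S \<subseteq> mcarr M \<and>
     (\<forall>A. submod M A \<and> S \<subseteq> A \<longrightarrow> A = mcarr M))"

definition modlam :: "('m, 'r::ring_1) rmod \<Rightarrow> bool" where
  "modlam M \<longleftrightarrow> rmodule M \<and> fingen M"

definition hom :: "('m, 'r) rmod \<Rightarrow> ('n, 'r) rmod \<Rightarrow> ('m \<Rightarrow> 'n) \<Rightarrow> bool" where
  "hom M N f \<longleftrightarrow> (\<forall>x\<in>mcarr M. f x \<in> mcarr N) \<and>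
     (\<forall>x\<in>mcarr M. \<forall>y\<in>mcarr M. f (madd M x y) = madd N (f x) (f y)) \<and>
     (\<forall>x\<in>mcarr M. \<forall>r. f (mact M x r) = mact N (f x) r)"

definition kern :: "('m, 'r) rmod \<Rightarrow> ('n, 'r) rmod \<Rightarrow> ('m \<Rightarrow> 'n) \<Rightarrow> 'm set" where
  "kern M N f = {x \<in> mcarr M. f x = mzero N}"

definition torsion_class :: "('m, 'r::ring_1) rmod set \<Rightarrow> bool" where
  "torsion_class G \<longleftrightarrow>
     (\<forall>M\<in>G. modlam M) \<and>
     (\<forall>M N f. M \<in> G \<and> modlam N \<and> hom M N f \<and> bij_betw f (mcarr M) (mcarr N) \<longrightarrow> N \<in> G) \<and>
     (\<forall>M N f. M \<in> G \<and> modlam N \<and> hom M N f \<and> f ` mcarr M = mcarr N \<longrightarrow> N \<in> G) \<and>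
     (\<forall>A B C i p. modlam A \<and> modlam B \<and> modlam C \<and> hom A B i \<and> inj_on i (mcarr A) \<and>
        hom B C p \<and> p ` mcarr B = mcarr C \<and> i ` mcarr A = kern B C p \<and> A \<in> G \<and> C \<in> G
        \<longrightarrow> B \<in> G)"

definition subobj :: "('m, 'r) rmod set \<Rightarrow> ('m, 'r) rmod \<Rightarrow> 'm set \<Rightarrow> bool" where
  "subobj G B A \<longleftrightarrow> submod B A \<and> restr B A \<in> G"

definition strict_sub :: "('m, 'r) rmod set \<Rightarrow> ('m, 'r) rmod \<Rightarrow> 'm set \<Rightarrow> bool" where
  "strict_sub G B A \<longleftrightarrow> subobj G B A \<and> (\<forall>B'. subobj G B B' \<longrightarrow> restr B (A \<inter> B') \<in> G)"

(* q : M -> N is a quotient map with kernel A, i.e. N is (a copy of) M/A *)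
definition quot_map :: "('m, 'r) rmod \<Rightarrow> ('m, 'r) rmod \<Rightarrow> ('m \<Rightarrow> 'm) \<Rightarrow> 'm set \<Rightarrow> bool" where
  "quot_map M N q A \<longleftrightarrow> hom M N q \<and> q ` mcarr M = mcarr N \<and> kern M N q = A"

definition strict_exact :: "('m, 'r) rmod set \<Rightarrow> ('m, 'r) rmod \<Rightarrow> ('m, 'r) rmod \<Rightarrow> ('m, 'r) rmod
     \<Rightarrow> ('m \<Rightarrow> 'm) \<Rightarrow> ('m \<Rightarrow> 'm) \<Rightarrow> bool" where
  "strict_exact G A B C i p \<longleftrightarrow> A \<in> G \<and> B \<in> G \<and> C \<in> G \<and>
     hom A B i \<and> inj_on i (mcarr A) \<and> hom B C p \<and> p ` mcarr B = mcarr C \<and>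
     i ` mcarr A = kern B C p \<and> strict_sub G B (i ` mcarr A)"

definition strict_mor :: "('m, 'r) rmod set \<Rightarrow> ('m, 'r) rmod \<Rightarrow> ('m, 'r) rmod \<Rightarrow> ('m \<Rightarrow> 'm) \<Rightarrow> bool" where
  "strict_mor G A B f \<longleftrightarrow> A \<in> G \<and> B \<in> G \<and> hom A B f \<and>
     strict_sub G A (kern A B f) \<and> strict_sub G B (f ` mcarr A)"

definition pseudo_torsion :: "('m, 'r::ring_1) rmod set \<Rightarrow> ('m, 'r) rmod set \<Rightarrow> bool" where
  "pseudo_torsion G P \<longleftrightarrow> P \<noteq> {} \<and> P \<subseteq> G \<and>
     (\<forall>B N q A. B \<in> P \<and> modlam N \<and> strict_sub G B A \<and> quot_map B N q A \<longrightarrow> N \<in> P) \<and>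
     (\<forall>A B C i p. strict_exact G A B C i p \<and> A \<in> P \<and> C \<in> P \<longrightarrow> B \<in> P)"

definition perp :: "('m, 'r) rmod set \<Rightarrow> ('m, 'r) rmod set \<Rightarrow> ('m, 'r) rmod set" where
  "perp G X = {Y \<in> G. \<forall>X' f. X' \<in> X \<and> strict_mor G X' Y f \<longrightarrow> (\<forall>x\<in>mcarr X'. f x = mzero Y)}"

definition tors_part :: "('m, 'r::ring_1) rmod set \<Rightarrow> ('m, 'r) rmod set \<Rightarrow> ('m, 'r) rmod set
     \<Rightarrow> ('m, 'r) rmod \<Rightarrow> 'm set \<Rightarrow> bool" where
  "tors_part G P Q M T \<longleftrightarrow> strict_sub G M T \<and> restr M T \<in> P \<and>
     (\<exists>F q. modlam F \<and> quot_map M F q T \<and> F \<in> Q)"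

end

theory Submission
  imports Defs
begin

lemma restr_simps[simp]:
  "mcarr (restr M A) = A" "madd (restr M A) = madd M" "mzero (restr M A) = mzero M"
  "mact (restr M A) = mact M"
  by (simp_all add: restr_def)

lemma restr_restr[simp]: "restr (restr M A) B = restr M B"
  by (simp add: restr_def)

lemma restr_carr[simp]: "restr M (mcarr M) = M"
  by (simp add: restr_def)

context
  fixes M :: "('m,'r::ring_1) rmod"
  assumes RM: "rmodule M"
begin

lemma rmD:
  assumes "rmodule M"
  shows "mzero M \<in> mcarr M \<and>
     (\<forall>x\<in>mcarr M. \<forall>y\<in>mcarr M. madd M x y \<in> mcarr M) \<and>
     (\<forall>x\<in>mcarr M. \<forall>r. mact M x r \<in> mcarr M) \<and>
     (\<forall>x\<in>mcarr M. \<forall>y\<in>mcarr M. \<forall>z\<in>mcarr M. madd M (madd M x y) z = madd M x (madd M y z)) \<and>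
     (\<forall>x\<in>mcarr M. \<forall>y\<in>mcarr M. madd M x y = madd M y x) \<and>
     (\<forall>x\<in>mcarr M. madd M (mzero M) x = x) \<and>
     (\<forall>x\<in>mcarr M. \<exists>y\<in>mcarr M. madd M x y = mzero M) \<and>
     (\<forall>x\<in>mcarr M. \<forall>y\<in>mcarr M. \<forall>r. mact M (madd M x y) r = madd M (mact M x r) (mact M y r)) \<and>
     (\<forall>x\<in>mcarr M. \<forall>r s. mact M x (r + s) = madd M (mact M x r) (mact M x s)) \<and>
     (\<forall>x\<in>mcarr M. \<forall>r s. mact M x (r * s) = mact M (mact M x r) s) \<and>
     (\<forall>x\<in>mcarr M. mact M x 1 = x)"
  using assms unfolding rmodule_def .

lemma rz: "mzero M \<in> mcarr M"
  using rmD[OF RM, THEN conjunct1] .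
lemma ra: "x \<in> mcarr M \<Longrightarrow> y \<in> mcarr M \<Longrightarrow> madd M x y \<in> mcarr M"
  using rmD[OF RM, THEN conjunct2, THEN conjunct1] by blast
lemma rs: "x \<in> mcarr M \<Longrightarrow> mact M x r \<in> mcarr M"
  using rmD[OF RM, THEN conjunct2, THEN conjunct2, THEN conjunct1] by blast
lemma rassoc: "x \<in> mcarr M \<Longrightarrow> y \<in> mcarr M \<Longrightarrow> z \<in> mcarr M \<Longrightarrow>
   madd M (madd M x y) z = madd M x (madd M y z)"
  using rmD[OF RM, THEN conjunct2, THEN conjunct2, THEN conjunct2, THEN conjunct1] by blast
lemma rcomm: "x \<in> mcarr M \<Longrightarrow> y \<in> mcarr M \<Longrightarrow> madd M x y = madd M y x"
  using rmD[OF RM, THEN conjunct2, THEN conjunct2, THEN conjunct2, THEN conjunct2, THEN conjunct1] by blast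
lemma rlz: "x \<in> mcarr M \<Longrightarrow> madd M (mzero M) x = x"
  using rmD[OF RM, THEN conjunct2, THEN conjunct2, THEN conjunct2, THEN conjunct2, THEN conjunct2, THEN conjunct1] by blast
lemma rinv: "x \<in> mcarr M \<Longrightarrow> \<exists>y\<in>mcarr M. madd M x y = mzero M"
  using rmD[OF RM, THEN conjunct2, THEN conjunct2, THEN conjunct2, THEN conjunct2, THEN conjunct2, THEN conjunct2, THEN conjunct1] by blast
lemma rd1: "x \<in> mcarr M \<Longrightarrow> y \<in> mcarr M \<Longrightarrow>
   mact M (madd M x y) r = madd M (mact M x r) (mact M y r)"
  using rmD[OF RM, THEN conjunct2, THEN conjunct2, THEN conjunct2, THEN conjunct2, THEN conjunct2, THEN conjunct2, THEN conjunct2, THEN conjunct1] by blast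
lemma rd2: "x \<in> mcarr M \<Longrightarrow> mact M x (r + s) = madd M (mact M x r) (mact M x s)"
  using rmD[OF RM, THEN conjunct2, THEN conjunct2, THEN conjunct2, THEN conjunct2, THEN conjunct2, THEN conjunct2, THEN conjunct2, THEN conjunct2, THEN conjunct1] by blast
lemma rmul: "x \<in> mcarr M \<Longrightarrow> mact M x (r * s) = mact M (mact M x r) s"
  using rmD[OF RM, THEN conjunct2, THEN conjunct2, THEN conjunct2, THEN conjunct2, THEN conjunct2, THEN conjunct2, THEN conjunct2, THEN conjunct2, THEN conjunct2, THEN conjunct1] by blast
lemma rone: "x \<in> mcarr M \<Longrightarrow> mact M x 1 = x"
  using rmD[OF RM, THEN conjunct2, THEN conjunct2, THEN conjunct2, THEN conjunct2, THEN conjunct2, THEN conjunct2, THEN conjunct2, THEN conjunct2, THEN conjunct2, THEN conjunct2] by blast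
lemma rrz: "x \<in> mcarr M \<Longrightarrow> madd M x (mzero M) = x"
  using rlz rcomm rz by metis

lemma rcancel:
  assumes "x \<in> mcarr M" "y \<in> mcarr M" "z \<in> mcarr M" "madd M x y = madd M x z"
  shows "y = z"
proof -
  obtain w where w: "w \<in> mcarr M" "madd M x w = mzero M" using rinv assms(1) by blast
  have wx: "madd M w x = mzero M" using w rcomm assms(1) by metis
  have "y = madd M (madd M w x) y" using wx rlz assms by simp
  also have "\<dots> = madd M w (madd M x z)" using rassoc w assms by simp
  also have "\<dots> = z" using rassoc w assms wx rlz by metis
  finally show ?thesis .
qed

lemma ract0: "x \<in> mcarr M \<Longrightarrow> mact M x 0 = mzero M"
proof -
  assume x: "x \<in> mcarr M"
  have "madd M (mact M x 0) (mact M x 0) = madd M (mact M x 0) (mzero M)"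
    using rd2[OF x, of 0 0] rrz rs x by simp
  then show ?thesis using rcancel rs x rz by blast
qed

lemma r0act: "mact M (mzero M) r = mzero M"
proof -
  have "madd M (mact M (mzero M) r) (mact M (mzero M) r) = madd M (mact M (mzero M) r) (mzero M)"
    using rd1[OF rz rz, of r] rrz rs rz rlz by simp
  then show ?thesis using rcancel rs rz by blast
qed

lemma rneg: "x \<in> mcarr M \<Longrightarrow> madd M x (mact M x (-1)) = mzero M"
  using rd2[of x 1 "-1"] rone ract0 by simp

lemma rneg': "x \<in> mcarr M \<Longrightarrow> madd M (mact M x (-1)) x = mzero M"
  using rneg rcomm rs by metis

lemma req_of_diff:
  assumes "a \<in> mcarr M" "b \<in> mcarr M" "madd M a (mact M b (-1)) = mzero M"
  shows "a = b"
proof -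
  have "a = madd M a (madd M (mact M b (-1)) b)" using rneg' assms rrz by simp
  also have "\<dots> = madd M (madd M a (mact M b (-1))) b" using rassoc[OF assms(1) rs[OF assms(2)] assms(2)] by simp
  also have "\<dots> = b" using assms rlz by simp
  finally show ?thesis .
qed

lemma rswap4:
  assumes "a \<in> mcarr M" "b \<in> mcarr M" "c \<in> mcarr M" "d \<in> mcarr M"
  shows "madd M (madd M a b) (madd M c d) = madd M (madd M a c) (madd M b d)"
proof -
  have "madd M (madd M a b) (madd M c d) = madd M a (madd M b (madd M c d))"
    using assms rassoc ra by simp
  also have "madd M b (madd M c d) = madd M c (madd M b d)"
    using assms rassoc rcomm ra by metis
  finally show ?thesis using assms rassoc ra by simp
qed

end

lemma rmoduleI:
  assumes "mzero M \<in> mcarr M"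
    and "\<And>x y. x \<in> mcarr M \<Longrightarrow> y \<in> mcarr M \<Longrightarrow> madd M x y \<in> mcarr M"
    and "\<And>x r. x \<in> mcarr M \<Longrightarrow> mact M x r \<in> mcarr M"
    and "\<And>x y z. x \<in> mcarr M \<Longrightarrow> y \<in> mcarr M \<Longrightarrow> z \<in> mcarr M \<Longrightarrow> madd M (madd M x y) z = madd M x (madd M y z)"
    and "\<And>x y. x \<in> mcarr M \<Longrightarrow> y \<in> mcarr M \<Longrightarrow> madd M x y = madd M y x"
    and "\<And>x. x \<in> mcarr M \<Longrightarrow> madd M (mzero M) x = x"
    and "\<And>x. x \<in> mcarr M \<Longrightarrow> \<exists>y\<in>mcarr M. madd M x y = mzero M"
    and "\<And>x y r. x \<in> mcarr M \<Longrightarrow> y \<in> mcarr M \<Longrightarrow> mact M (madd M x y) r = madd M (mact M x r) (mact M y r)"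
    and "\<And>x r s. x \<in> mcarr M \<Longrightarrow> mact M x (r + s) = madd M (mact M x r) (mact M x s)"
    and "\<And>x r s. x \<in> mcarr M \<Longrightarrow> mact M x (r * s) = mact M (mact M x r) s"
    and "\<And>x. x \<in> mcarr M \<Longrightarrow> mact M x 1 = x"
  shows "rmodule M"
  unfolding rmodule_def
  apply (intro conjI ballI allI)
  using assms apply simp_all
  done

lemma homD:
  assumes "hom M N f"
  shows "x \<in> mcarr M \<Longrightarrow> f x \<in> mcarr N"
    and "x \<in> mcarr M \<Longrightarrow> y \<in> mcarr M \<Longrightarrow> f (madd M x y) = madd N (f x) (f y)"
    and "x \<in> mcarr M \<Longrightarrow> f (mact M x r) = mact N (f x) r"
  using assms unfolding hom_def by blast+

lemma homI:
  assumes "\<And>x. x \<in> mcarr M \<Longrightarrow> f x \<in> mcarr N"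
    and "\<And>x y. x \<in> mcarr M \<Longrightarrow> y \<in> mcarr M \<Longrightarrow> f (madd M x y) = madd N (f x) (f y)"
    and "\<And>x r. x \<in> mcarr M \<Longrightarrow> f (mact M x r) = mact N (f x) r"
  shows "hom M N f"
  using assms unfolding hom_def by blast

lemma submodD:
  assumes "submod M A"
  shows "A \<subseteq> mcarr M" "mzero M \<in> A"
    and "x \<in> A \<Longrightarrow> y \<in> A \<Longrightarrow> madd M x y \<in> A"
    and "x \<in> A \<Longrightarrow> mact M x r \<in> A"
  using assms unfolding submod_def by blast+

lemma submodI:
  assumes "A \<subseteq> mcarr M" "mzero M \<in> A"
    and "\<And>x y. x \<in> A \<Longrightarrow> y \<in> A \<Longrightarrow> madd M x y \<in> A"
    and "\<And>x r. x \<in> A \<Longrightarrow> mact M x r \<in> A"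
  shows "submod M A"
  using assms unfolding submod_def by blast

lemma hom_zero:
  assumes "rmodule M" "rmodule N" "hom M N f"
  shows "f (mzero M) = mzero N"
proof -
  have z: "f (mzero M) \<in> mcarr N" using homD(1)[OF assms(3) rz[OF assms(1)]] .
  have "f (mzero M) = f (madd M (mzero M) (mzero M))" using rlz[OF assms(1)] rz[OF assms(1)] by simp
  also have "\<dots> = madd N (f (mzero M)) (f (mzero M))" using homD(2)[OF assms(3)] rz[OF assms(1)] by blast
  finally have "madd N (f (mzero M)) (f (mzero M)) = madd N (f (mzero M)) (mzero N)"
    using rrz[OF assms(2) z] by simp
  then show ?thesis using rcancel[OF assms(2) z z rz[OF assms(2)]] by simp
qed

lemma hom_eq_iff:
  assumes "rmodule M" "rmodule N" "hom M N f" "x \<in> mcarr M" "y \<in> mcarr M"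
  shows "f x = f y \<longleftrightarrow> madd M x (mact M y (-1)) \<in> kern M N f"
proof -
  have fx: "f x \<in> mcarr N" "f y \<in> mcarr N" using homD(1)[OF assms(3)] assms(4,5) by auto
  have e: "f (madd M x (mact M y (-1))) = madd N (f x) (mact N (f y) (-1))"
    using homD(2,3)[OF assms(3)] assms(4,5) rs[OF assms(1)] by simp
  have c: "madd M x (mact M y (-1)) \<in> mcarr M" using assms(4,5) ra[OF assms(1)] rs[OF assms(1)] by simp
  show ?thesis
  proof
    assume "f x = f y"
    then show "madd M x (mact M y (-1)) \<in> kern M N f"
      using e rneg[OF assms(2) fx(2)] c unfolding kern_def by simp
  next
    assume "madd M x (mact M y (-1)) \<in> kern M N f"
    then have "madd N (f x) (mact N (f y) (-1)) = mzero N" using e unfolding kern_def by simp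
    then show "f x = f y" using req_of_diff[OF assms(2) fx] by simp
  qed
qed

lemma submod_restr:
  assumes "submod M A"
  shows "submod (restr M A) B \<longleftrightarrow> submod M B \<and> B \<subseteq> A"
  using assms unfolding submod_def by auto

lemma rmodule_restr:
  assumes "rmodule M" "submod M A"
  shows "rmodule (restr M A)"
proof -
  note A = submodD[OF assms(2)]
  have s: "x \<in> A \<Longrightarrow> x \<in> mcarr M" for x using A(1) by blast
  show ?thesis
    apply (rule rmoduleI; simp only: restr_simps)
    using A apply simp_all
    using s rassoc[OF assms(1)] apply simp
    using s rcomm[OF assms(1)] apply simp
    using s rlz[OF assms(1)] apply simp
    using s rneg[OF assms(1)] A(4) apply blast
    using s rd1[OF assms(1)] apply simp
    using s rd2[OF assms(1)] apply simp
    using s rmul[OF assms(1)] apply simp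
    using s rone[OF assms(1)] apply simp
    done
qed

lemma submod_carr: "rmodule M \<Longrightarrow> submod M (mcarr M)"
  by (rule submodI) (auto intro: rz ra rs)

lemma submod_Int: "submod M A \<Longrightarrow> submod M B \<Longrightarrow> submod M (A \<inter> B)"
  unfolding submod_def by blast

lemma submod_zero: "rmodule M \<Longrightarrow> submod M {mzero M}"
  by (rule submodI) (auto simp: rz rlz r0act)

lemma submod_image:
  assumes "rmodule M" "rmodule N" "hom M N f" "submod M X"
  shows "submod N (f ` X)"
proof -
  note X = submodD[OF assms(4)]
  note h = homD[OF assms(3)]
  have s: "x \<in> X \<Longrightarrow> x \<in> mcarr M" for x using X(1) by blast
  show ?thesis
  proof (rule submodI)
    show "f ` X \<subseteq> mcarr N" using s h(1) by blast
    have "f (mzero M) \<in> f ` X" using X(2) by (rule imageI)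
    then show "mzero N \<in> f ` X" using hom_zero[OF assms(1-3)] by simp
  next
    fix a b assume "a \<in> f ` X" "b \<in> f ` X"
    then obtain x y where xy: "x \<in> X" "y \<in> X" "a = f x" "b = f y" by blast
    have "madd N a b = f (madd M x y)" using xy h(2) s by simp
    moreover have "f (madd M x y) \<in> f ` X" using X(3)[OF xy(1,2)] by (rule imageI)
    ultimately show "madd N a b \<in> f ` X" by simp
  next
    fix a r assume "a \<in> f ` X"
    then obtain x where xy: "x \<in> X" "a = f x" by blast
    have "mact N a r = f (mact M x r)" using xy h(3) s by simp
    moreover have "f (mact M x r) \<in> f ` X" using X(4)[OF xy(1)] by (rule imageI)
    ultimately show "mact N a r \<in> f ` X" by simp
  qed
qed

lemma submod_preimage:
  assumes "rmodule M" "rmodule N" "hom M N f" "submod N D"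
  shows "submod M {x \<in> mcarr M. f x \<in> D}"
proof -
  note D = submodD[OF assms(4)]
  note h = homD[OF assms(3)]
  show ?thesis
    apply (rule submodI)
    using hom_zero[OF assms(1-3)] rz[OF assms(1)] D apply simp_all
    using ra[OF assms(1)] h(2) D(3) apply simp
    using rs[OF assms(1)] h(3) D(4) apply simp
    done
qed

lemma submod_kern:
  assumes "rmodule M" "rmodule N" "hom M N f"
  shows "submod M (kern M N f)"
proof -
  have "kern M N f = {x \<in> mcarr M. f x \<in> {mzero N}}" unfolding kern_def by auto
  then show ?thesis using submod_preimage[OF assms submod_zero[OF assms(2)]] by simp
qed

lemma img_rmodule:
  assumes RM: "rmodule M" and h: "hom M N f" and sur: "f ` mcarr M = mcarr N"
    and z: "mzero N = f (mzero M)"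
  shows "rmodule N"
proof -
  note H = homD[OF h]
  have ex: "\<And>a. a \<in> mcarr N \<Longrightarrow> \<exists>x\<in>mcarr M. a = f x" using sur by blast
  show ?thesis
  proof (rule rmoduleI)
    show "mzero N \<in> mcarr N" using z H(1) rz[OF RM] by simp
  next
    fix a b assume "a \<in> mcarr N" "b \<in> mcarr N"
    then obtain x y where xy: "x \<in> mcarr M" "y \<in> mcarr M" "a = f x" "b = f y" using ex by blast
    show "madd N a b \<in> mcarr N" using xy H(1) H(2)[symmetric] ra[OF RM] by simp
  next
    fix a r assume "a \<in> mcarr N"
    then obtain x where xy: "x \<in> mcarr M" "a = f x" using ex by blast
    show "mact N a r \<in> mcarr N" using xy H(1) H(3)[symmetric] rs[OF RM] by simp
  next
    fix a b c assume "a \<in> mcarr N" "b \<in> mcarr N" "c \<in> mcarr N"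
    then obtain x y w where xy: "x \<in> mcarr M" "y \<in> mcarr M" "w \<in> mcarr M" "a = f x" "b = f y" "c = f w"
      using ex by meson
    show "madd N (madd N a b) c = madd N a (madd N b c)"
      using xy H(2)[symmetric] ra[OF RM] rassoc[OF RM] by simp
  next
    fix a b assume "a \<in> mcarr N" "b \<in> mcarr N"
    then obtain x y where xy: "x \<in> mcarr M" "y \<in> mcarr M" "a = f x" "b = f y" using ex by blast
    show "madd N a b = madd N b a" using xy H(2)[symmetric] rcomm[OF RM] by simp
  next
    fix a assume "a \<in> mcarr N"
    then obtain x where xy: "x \<in> mcarr M" "a = f x" using ex by blast
    show "madd N (mzero N) a = a" using xy H(2)[symmetric] rlz[OF RM] rz[OF RM] z by simp
  next
    fix a assume "a \<in> mcarr N"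
    then obtain x where xy: "x \<in> mcarr M" "a = f x" using ex by blast
    then obtain y where y: "y \<in> mcarr M" "madd M x y = mzero M" using rinv[OF RM] by blast
    have "madd N a (f y) = f (madd M x y)" using H(2)[OF xy(1) y(1)] xy(2) by simp
    then have "madd N a (f y) = mzero N" using y(2) z by simp
    then show "\<exists>b\<in>mcarr N. madd N a b = mzero N" using H(1)[OF y(1)] by blast
  next
    fix a b r assume "a \<in> mcarr N" "b \<in> mcarr N"
    then obtain x y where xy: "x \<in> mcarr M" "y \<in> mcarr M" "a = f x" "b = f y" using ex by blast
    show "mact N (madd N a b) r = madd N (mact N a r) (mact N b r)"
      using xy H(2)[symmetric] H(3)[symmetric] rd1[OF RM] ra[OF RM] rs[OF RM] by simp
  next
    fix a r s assume "a \<in> mcarr N"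
    then obtain x where xy: "x \<in> mcarr M" "a = f x" using ex by blast
    show "mact N a (r + s) = madd N (mact N a r) (mact N a s)"
      using xy H(2)[symmetric] H(3)[symmetric] rd2[OF RM] rs[OF RM] by simp
  next
    fix a r s assume "a \<in> mcarr N"
    then obtain x where xy: "x \<in> mcarr M" "a = f x" using ex by blast
    show "mact N a (r * s) = mact N (mact N a r) s"
      using xy H(3)[symmetric] rmul[OF RM] rs[OF RM] by simp
  next
    fix a assume "a \<in> mcarr N"
    then obtain x where xy: "x \<in> mcarr M" "a = f x" using ex by blast
    show "mact N a 1 = a"
      using xy H(3)[symmetric] rone[OF RM] by simp
  qed
qed

lemma fingen_image:
  assumes RM: "rmodule M" and RN: "rmodule N" and h: "hom M N f"
    and sur: "f ` mcarr M = mcarr N" and fg: "fingen M"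
  shows "fingen N"
proof -
  obtain S where S1: "finite S" and S2: "S \<subseteq> mcarr M" and S3: "\<forall>A. submod M A \<and> S \<subseteq> A \<longrightarrow> A = mcarr M"
    using fg unfolding fingen_def by (elim exE conjE)
  have F1: "finite (f ` S)" using S1 by simp
  have F2: "f ` S \<subseteq> mcarr N" using S2 sur by auto
  have F3: "A = mcarr N" if A: "submod N A \<and> f ` S \<subseteq> A" for A
  proof -
    have sp: "submod M {x \<in> mcarr M. f x \<in> A}" using submod_preimage[OF RM RN h] A by simp
    have "S \<subseteq> {x \<in> mcarr M. f x \<in> A}" using A S2 by auto
    then have pre: "{x \<in> mcarr M. f x \<in> A} = mcarr M" by (intro S3[rule_format] conjI sp)
    have "mcarr N \<subseteq> A"
    proof
      fix n assume "n \<in> mcarr N"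
      then obtain x where x: "x \<in> mcarr M" "n = f x" using sur by auto
      then have "x \<in> {x \<in> mcarr M. f x \<in> A}" using pre by simp
      then show "n \<in> A" using x(2) by simp
    qed
    moreover have "A \<subseteq> mcarr N" using A by (intro submodD(1)) simp
    ultimately show ?thesis by (rule subset_antisym[rotated])
  qed
  show ?thesis unfolding fingen_def
    apply (intro exI[of _ "f ` S"] conjI F1 F2 allI impI)
    apply (erule F3)
    done
qed

definition qrel :: "('m,'r::ring_1) rmod \<Rightarrow> 'm set \<Rightarrow> 'm \<Rightarrow> 'm \<Rightarrow> bool" where
  "qrel M T x y \<longleftrightarrow> x \<in> mcarr M \<and> y \<in> mcarr M \<and> madd M x (mact M y (-1)) \<in> T"

definition qmap :: "('m,'r::ring_1) rmod \<Rightarrow> 'm set \<Rightarrow> 'm \<Rightarrow> 'm" where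
  "qmap M T x = (SOME y. qrel M T x y)"

definition QuotM :: "('m,'r::ring_1) rmod \<Rightarrow> 'm set \<Rightarrow> ('m,'r) rmod" where
  "QuotM M T = \<lparr>mcarr = qmap M T ` mcarr M, madd = (\<lambda>a b. qmap M T (madd M a b)),
     mzero = qmap M T (mzero M), mact = (\<lambda>a r. qmap M T (mact M a r))\<rparr>"

context
  fixes M :: "('m,'r::ring_1) rmod" and T
  assumes RM: "rmodule M" and ST: "submod M T"
begin

lemma neg_diff:
  assumes "x \<in> mcarr M" "y \<in> mcarr M"
  shows "mact M (madd M x (mact M y (-1))) (-1) = madd M y (mact M x (-1))"
proof -
  have "mact M (madd M x (mact M y (-1))) (-1) = madd M (mact M x (-1)) (mact M (mact M y (-1)) (-1))"
    using rd1[OF RM] rs[OF RM] assms by simp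
  also have "mact M (mact M y (-1)) (-1) = y" using rmul[OF RM assms(2), of "-1" "-1", symmetric] rone[OF RM assms(2)] by simp
  finally show ?thesis using rcomm[OF RM rs[OF RM assms(1)] assms(2)] by simp
qed

lemma qrel_refl: "x \<in> mcarr M \<Longrightarrow> qrel M T x x"
  unfolding qrel_def using rneg[OF RM] submodD(2)[OF ST] by simp

lemma qrel_sym: "qrel M T x y \<Longrightarrow> qrel M T y x"
proof -
  assume a: "qrel M T x y"
  then have c: "x \<in> mcarr M" "y \<in> mcarr M" and t: "madd M x (mact M y (-1)) \<in> T"
    unfolding qrel_def by auto
  have "mact M (madd M x (mact M y (-1))) (-1) \<in> T" using t by (rule submodD(4)[OF ST])
  then have "madd M y (mact M x (-1)) \<in> T" using neg_diff[OF c] by simp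
  then show ?thesis using c unfolding qrel_def by simp
qed

lemma qrel_trans: "qrel M T x y \<Longrightarrow> qrel M T y z \<Longrightarrow> qrel M T x z"
proof -
  assume a: "qrel M T x y" "qrel M T y z"
  then have c: "x \<in> mcarr M" "y \<in> mcarr M" "z \<in> mcarr M" unfolding qrel_def by auto
  note ns = rs[OF RM c(2), of "-1"] rs[OF RM c(3), of "-1"]
  have "madd M (madd M x (mact M y (-1))) (madd M y (mact M z (-1)))
      = madd M x (madd M (mact M y (-1)) (madd M y (mact M z (-1))))"
    using rassoc[OF RM] c ns ra[OF RM] by simp
  also have "madd M (mact M y (-1)) (madd M y (mact M z (-1))) = madd M (madd M (mact M y (-1)) y) (mact M z (-1))"
    using rassoc[OF RM] c ns by simp
  also have "\<dots> = mact M z (-1)" using rneg'[OF RM c(2)] rlz[OF RM] ns by simp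
  finally have e: "madd M (madd M x (mact M y (-1))) (madd M y (mact M z (-1))) = madd M x (mact M z (-1))" .
  have "madd M (madd M x (mact M y (-1))) (madd M y (mact M z (-1))) \<in> T"
    using a submodD(3)[OF ST] unfolding qrel_def by blast
  then show ?thesis using e c unfolding qrel_def by simp
qed

lemma qrel_add: "qrel M T x x' \<Longrightarrow> qrel M T y y' \<Longrightarrow> qrel M T (madd M x y) (madd M x' y')"
proof -
  assume a: "qrel M T x x'" "qrel M T y y'"
  then have c: "x \<in> mcarr M" "x' \<in> mcarr M" "y \<in> mcarr M" "y' \<in> mcarr M" unfolding qrel_def by auto
  note ns = rs[OF RM c(2), of "-1"] rs[OF RM c(4), of "-1"]
  have "madd M (madd M x y) (mact M (madd M x' y') (-1)) = madd M (madd M x y) (madd M (mact M x' (-1)) (mact M y' (-1)))"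
    using rd1[OF RM c(2,4)] by simp
  also have "\<dots> = madd M (madd M x (mact M x' (-1))) (madd M y (mact M y' (-1)))"
    using rswap4[OF RM c(1) c(3) ns] by simp
  finally have e: "madd M (madd M x y) (mact M (madd M x' y') (-1)) = madd M (madd M x (mact M x' (-1))) (madd M y (mact M y' (-1)))" .
  have "madd M (madd M x (mact M x' (-1))) (madd M y (mact M y' (-1))) \<in> T"
    using a submodD(3)[OF ST] unfolding qrel_def by blast
  then show ?thesis using e c ra[OF RM] unfolding qrel_def by simp
qed

lemma qrel_act: "qrel M T x x' \<Longrightarrow> qrel M T (mact M x r) (mact M x' r)"
proof -
  assume a: "qrel M T x x'"
  then have c: "x \<in> mcarr M" "x' \<in> mcarr M" unfolding qrel_def by auto
  have e1: "mact M (madd M x (mact M x' (-1))) r = madd M (mact M x r) (mact M (mact M x' (-1)) r)"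
    using rd1[OF RM c(1) rs[OF RM c(2)]] .
  have "mact M (mact M x' (-1)) r = mact M x' ((-1)*r)" by (rule rmul[OF RM c(2), symmetric])
  also have "(-1)*r = r*(-1)" by simp
  also have "mact M x' (r*(-1)) = mact M (mact M x' r) (-1)" by (rule rmul[OF RM c(2)])
  finally have e: "mact M (madd M x (mact M x' (-1))) r = madd M (mact M x r) (mact M (mact M x' r) (-1))"
    using e1 by simp
  have "mact M (madd M x (mact M x' (-1))) r \<in> T" using a submodD(4)[OF ST] unfolding qrel_def by blast
  then show ?thesis using e c rs[OF RM] unfolding qrel_def by simp
qed

lemma qmap_rel: "x \<in> mcarr M \<Longrightarrow> qrel M T x (qmap M T x)"
  unfolding qmap_def using qrel_refl by (rule someI)

lemma qmap_carr: "x \<in> mcarr M \<Longrightarrow> qmap M T x \<in> mcarr M"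
  using qmap_rel unfolding qrel_def by blast

lemma qmap_eq: "x \<in> mcarr M \<Longrightarrow> y \<in> mcarr M \<Longrightarrow> qmap M T x = qmap M T y \<longleftrightarrow> qrel M T x y"
proof
  assume a: "x \<in> mcarr M" "y \<in> mcarr M" "qmap M T x = qmap M T y"
  have 1: "qrel M T x (qmap M T x)" by (rule qmap_rel[OF a(1)])
  have "qrel M T y (qmap M T y)" by (rule qmap_rel[OF a(2)])
  then have 2: "qrel M T (qmap M T x) y" using a(3) qrel_sym by simp
  show "qrel M T x y" by (rule qrel_trans[OF 1 2])
next
  assume "qrel M T x y"
  then have "\<And>z. qrel M T x z = qrel M T y z"
    by (meson qrel_sym qrel_trans)
  then have "(\<lambda>z. qrel M T x z) = (\<lambda>z. qrel M T y z)" by blast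
  then show "qmap M T x = qmap M T y" unfolding qmap_def by simp
qed

lemma QuotM_simps:
  "mcarr (QuotM M T) = qmap M T ` mcarr M"
  "madd (QuotM M T) = (\<lambda>a b. qmap M T (madd M a b))"
  "mzero (QuotM M T) = qmap M T (mzero M)"
  "mact (QuotM M T) = (\<lambda>a r. qmap M T (mact M a r))"
  by (simp_all add: QuotM_def)

lemma qmap_hom: "hom M (QuotM M T) (qmap M T)"
proof (rule homI)
  fix x assume "x \<in> mcarr M" then show "qmap M T x \<in> mcarr (QuotM M T)" by (simp add: QuotM_simps)
next
  fix x y assume c: "x \<in> mcarr M" "y \<in> mcarr M"
  have "qrel M T (madd M x y) (madd M (qmap M T x) (qmap M T y))"
    using qrel_add qmap_rel c by blast
  then show "qmap M T (madd M x y) = madd (QuotM M T) (qmap M T x) (qmap M T y)"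
    using qmap_eq c ra[OF RM] qmap_carr by (simp add: QuotM_simps)
next
  fix x r assume c: "x \<in> mcarr M"
  have "qrel M T (mact M x r) (mact M (qmap M T x) r)"
    using qrel_act qmap_rel c by blast
  then show "qmap M T (mact M x r) = mact (QuotM M T) (qmap M T x) r"
    using qmap_eq c rs[OF RM] qmap_carr by (simp add: QuotM_simps)
qed

lemma QuotM_rmodule: "rmodule (QuotM M T)"
  by (rule img_rmodule[OF RM qmap_hom]) (simp_all add: QuotM_simps)

lemma QuotM_kern: "kern M (QuotM M T) (qmap M T) = T"
proof -
  have "x \<in> mcarr M \<Longrightarrow> qmap M T x = qmap M T (mzero M) \<longleftrightarrow> x \<in> T" for x
    using qmap_eq[of x "mzero M"] rz[OF RM] r0act[OF RM] rrz[OF RM] unfolding qrel_def by simp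
  then show ?thesis unfolding kern_def QuotM_simps using submodD(1)[OF ST] by blast
qed

lemma QuotM_quot_map: "quot_map M (QuotM M T) (qmap M T) T"
  unfolding quot_map_def using qmap_hom QuotM_kern by (simp add: QuotM_simps)

lemma QuotM_modlam: "modlam M \<Longrightarrow> modlam (QuotM M T)"
  unfolding modlam_def using QuotM_rmodule fingen_image[OF RM QuotM_rmodule qmap_hom] by (simp add: QuotM_simps)

end

lemma fdD:
  assumes "fd_algebra \<iota>"
  shows "\<iota> 1 = 1" "\<iota> (a + b) = \<iota> a + \<iota> b" "\<iota> (a * b) = \<iota> a * \<iota> b" "\<iota> a * x = x * \<iota> a"
    and "\<exists>B. finite B \<and> (\<forall>x. \<exists>c. x = (\<Sum>b\<in>B. \<iota> (c b) * b))"
  using assms unfolding fd_algebra_def by blast+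

lemma fd_zero:
  assumes "fd_algebra \<iota>" shows "\<iota> 0 = 0"
proof -
  have "\<iota> 0 + \<iota> 0 = \<iota> 0 + 0" using fdD(2)[OF assms, of 0 0] by simp
  then show ?thesis by simp
qed

lemma fd_m1:
  assumes "fd_algebra \<iota>" shows "\<iota> (-1) = -1"
proof -
  have "\<iota> (-1) + 1 = 0" using fdD(2)[OF assms, of "-1" 1] fdD(1)[OF assms] fd_zero[OF assms] by simp
  then show ?thesis by (simp add: eq_neg_iff_add_eq_0)
qed

inductive_set spanW :: "('m,'r::ring_1) rmod \<Rightarrow> ('k \<Rightarrow> 'r) \<Rightarrow> 'm set \<Rightarrow> 'm set \<Rightarrow> 'm set"
  for M \<iota> W U where
  sp_base: "x \<in> W \<Longrightarrow> x \<in> spanW M \<iota> W U"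
| sp_gen: "u \<in> U \<Longrightarrow> mact M u (\<iota> a) \<in> spanW M \<iota> W U"
| sp_add: "x \<in> spanW M \<iota> W U \<Longrightarrow> y \<in> spanW M \<iota> W U \<Longrightarrow> madd M x y \<in> spanW M \<iota> W U"

definition gdim :: "('m,'r::ring_1) rmod \<Rightarrow> ('k \<Rightarrow> 'r) \<Rightarrow> 'm set \<Rightarrow> nat" where
  "gdim M \<iota> W = (LEAST n. \<exists>U. finite U \<and> U \<subseteq> mcarr M \<and> card U = n \<and> mcarr M \<subseteq> spanW M \<iota> W U)"

definition mhull :: "('m,'r) rmod \<Rightarrow> 'm set \<Rightarrow> 'm set" where
  "mhull M S = \<Inter>{A. submod M A \<and> S \<subseteq> A}"

context
  fixes M :: "('m,'r::ring_1) rmod" and \<iota> :: "'k::field \<Rightarrow> 'r"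
  assumes RM: "rmodule M" and FD: "fd_algebra \<iota>"
begin

lemma span_carr:
  assumes "W \<subseteq> mcarr M" "U \<subseteq> mcarr M"
  shows "spanW M \<iota> W U \<subseteq> mcarr M"
proof
  fix x assume "x \<in> spanW M \<iota> W U"
  then show "x \<in> mcarr M"
    by induction (use assms rs[OF RM] ra[OF RM] in auto)
qed

lemma span_mono:
  assumes "W \<subseteq> W'" "U \<subseteq> U'"
  shows "spanW M \<iota> W U \<subseteq> spanW M \<iota> W' U'"
proof
  fix x assume "x \<in> spanW M \<iota> W U"
  then show "x \<in> spanW M \<iota> W' U'"
    by induction (use assms in \<open>auto intro: spanW.intros\<close>)
qed

lemma span_scale:
  assumes W: "submod M W" and U: "U \<subseteq> mcarr M" and x: "x \<in> spanW M \<iota> W U"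
  shows "mact M x (\<iota> a) \<in> spanW M \<iota> W U"
  using x
proof induction
  case (sp_base x)
  then show ?case using submodD(4)[OF W] by (blast intro: spanW.intros)
next
  case (sp_gen u b)
  have "mact M (mact M u (\<iota> b)) (\<iota> a) = mact M u (\<iota> (b * a))"
    using rmul[OF RM, of u] sp_gen U fdD(3)[OF FD] by auto
  then show ?case using sp_gen by (simp add: spanW.sp_gen)
next
  case (sp_add x y)
  have c: "x \<in> mcarr M" "y \<in> mcarr M" using span_carr[OF submodD(1)[OF W] U] sp_add by auto
  show ?case using rd1[OF RM c] sp_add by (simp add: spanW.sp_add)
qed

lemma span_closure:
  assumes W: "submod M W" and U0: "U0 \<subseteq> mcarr M" and U: "U \<subseteq> spanW M \<iota> W U0"
  shows "spanW M \<iota> W U \<subseteq> spanW M \<iota> W U0"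
proof
  fix x assume "x \<in> spanW M \<iota> W U"
  then show "x \<in> spanW M \<iota> W U0"
  proof induction
    case (sp_base x) then show ?case by (rule spanW.sp_base)
  next
    case (sp_gen u a) then show ?case using span_scale[OF W U0] U by blast
  next
    case (sp_add x y) then show ?case by (simp add: spanW.sp_add)
  qed
qed

lemma span_empty:
  assumes W: "submod M W" and x: "x \<in> spanW M \<iota> W {}"
  shows "x \<in> W"
  using x by induction (use submodD(3)[OF W] in auto)

lemma act_iota0: "u \<in> mcarr M \<Longrightarrow> mact M u (\<iota> 0) = mzero M"
  using fd_zero[OF FD] ract0[OF RM] by simp

lemma span_decomp:
  assumes W: "submod M W" and U0: "U0 \<subseteq> mcarr M" and u: "u \<in> mcarr M"
    and x: "x \<in> spanW M \<iota> W (insert u U0)"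
  shows "\<exists>a y. y \<in> spanW M \<iota> W U0 \<and> x = madd M (mact M u (\<iota> a)) y"
  using x
proof induction
  case (sp_base x)
  have "x \<in> mcarr M" using sp_base submodD(1)[OF W] by blast
  then have e: "x = madd M (mact M u (\<iota> 0)) x" using act_iota0[OF u] rlz[OF RM] by simp
  have "x \<in> spanW M \<iota> W U0" using sp_base by (rule spanW.sp_base)
  with e show ?case by (intro exI conjI)
next
  case (sp_gen v b)
  show ?case
  proof (cases "v = u")
    case True
    have e: "mact M v (\<iota> b) = madd M (mact M u (\<iota> b)) (mzero M)" using True rrz[OF RM] rs[OF RM u] by simp
    have "mzero M \<in> spanW M \<iota> W U0" using submodD(2)[OF W] by (rule spanW.sp_base)
    with e show ?thesis by (intro exI conjI)
  next
    case False
    then have v: "v \<in> U0" "v \<in> mcarr M" using sp_gen U0 by auto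
    have e: "mact M v (\<iota> b) = madd M (mact M u (\<iota> 0)) (mact M v (\<iota> b))"
      using act_iota0[OF u] rlz[OF RM] rs[OF RM v(2)] by simp
    have "mact M v (\<iota> b) \<in> spanW M \<iota> W U0" using v(1) by (rule spanW.sp_gen)
    with e show ?thesis by (intro exI conjI)
  qed
next
  case (sp_add x1 x2)
  obtain a1 y1 where 1: "y1 \<in> spanW M \<iota> W U0" "x1 = madd M (mact M u (\<iota> a1)) y1" using sp_add.IH(1) by blast
  obtain a2 y2 where 2: "y2 \<in> spanW M \<iota> W U0" "x2 = madd M (mact M u (\<iota> a2)) y2" using sp_add.IH(2) by blast
  have c: "y1 \<in> mcarr M" "y2 \<in> mcarr M" using 1 2 span_carr[OF submodD(1)[OF W] U0] by auto
  have "madd M x1 x2 = madd M (madd M (mact M u (\<iota> a1)) (mact M u (\<iota> a2))) (madd M y1 y2)"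
    unfolding 1(2) 2(2) by (rule rswap4[OF RM rs[OF RM u] c(1) rs[OF RM u] c(2)])
  also have "madd M (mact M u (\<iota> a1)) (mact M u (\<iota> a2)) = mact M u (\<iota> (a1 + a2))"
    using rd2[OF RM u] fdD(2)[OF FD] by simp
  finally have e: "madd M x1 x2 = madd M (mact M u (\<iota> (a1 + a2))) (madd M y1 y2)" .
  have "madd M y1 y2 \<in> spanW M \<iota> W U0" using 1(1) 2(1) by (rule spanW.sp_add)
  with e show ?case by (intro exI conjI)
qed

lemma key_exchange:
  assumes W: "submod M W" and W': "submod M W'" and WW: "W \<subseteq> W'"
    and fin: "finite U"
  shows "U \<subseteq> mcarr M \<Longrightarrow> x \<in> spanW M \<iota> W U \<Longrightarrow> x \<notin> W \<Longrightarrow> x \<in> W' \<Longrightarrow>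
     \<exists>u\<in>U. u \<in> spanW M \<iota> W' (U - {u})"
  using fin
proof (induction U arbitrary: x rule: finite_induct)
  case empty
  then show ?case using span_empty[OF W] by blast
next
  case (insert u U0)
  have u: "u \<in> mcarr M" and U0: "U0 \<subseteq> mcarr M" using insert by auto
  obtain a y where ay: "y \<in> spanW M \<iota> W U0" "x = madd M (mact M u (\<iota> a)) y"
    using span_decomp[OF W U0 u insert(5)] by blast
  have y: "y \<in> mcarr M" using ay span_carr[OF submodD(1)[OF W] U0] by auto
  show ?case
  proof (cases "a = 0")
    case True
    then have "x = y" using ay act_iota0[OF u] rlz[OF RM y] by simp
    have "y \<notin> W" "y \<in> W'" using \<open>x = y\<close> insert(6,7) by auto
    then have "\<exists>u\<in>U0. u \<in> spanW M \<iota> W' (U0 - {u})"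
      using insert.IH[OF U0 ay(1)] by blast
    then obtain u' where u': "u' \<in> U0" "u' \<in> spanW M \<iota> W' (U0 - {u'})" by blast
    have "spanW M \<iota> W' (U0 - {u'}) \<subseteq> spanW M \<iota> W' (insert u U0 - {u'})"
      by (rule span_mono) auto
    then show ?thesis using u' by blast
  next
    case False
    have xc: "x \<in> mcarr M" using insert(7) submodD(1)[OF W'] by blast
    have "madd M x (mact M y (-1)) = madd M (mact M u (\<iota> a)) (madd M y (mact M y (-1)))"
      using ay rassoc[OF RM rs[OF RM u] y rs[OF RM y]] by simp
    also have "\<dots> = mact M u (\<iota> a)" using rneg[OF RM y] rrz[OF RM rs[OF RM u]] by simp
    finally have e1: "madd M x (mact M y (-1)) = mact M u (\<iota> a)" .
    have "mact M (mact M u (\<iota> a)) (\<iota> (inverse a)) = mact M u (\<iota> (a * inverse a))"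
      using rmul[OF RM u] fdD(3)[OF FD] by simp
    also have "\<dots> = u" using False fdD(1)[OF FD] rone[OF RM u] by simp
    finally have e2: "mact M (madd M x (mact M y (-1))) (\<iota> (inverse a)) = u" using e1 by simp
    have sW': "spanW M \<iota> W U0 \<subseteq> spanW M \<iota> W' U0" by (rule span_mono[OF WW]) simp
    have "mact M y (\<iota> (-1)) \<in> spanW M \<iota> W' U0" using span_scale[OF W' U0] ay sW' by blast
    then have "mact M y (-1) \<in> spanW M \<iota> W' U0" using fd_m1[OF FD] by simp
    moreover have "x \<in> spanW M \<iota> W' U0" using insert(7) by (rule spanW.sp_base)
    ultimately have "madd M x (mact M y (-1)) \<in> spanW M \<iota> W' U0"
      by (intro spanW.sp_add)
    then have "mact M (madd M x (mact M y (-1))) (\<iota> (inverse a)) \<in> spanW M \<iota> W' U0"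
      by (rule span_scale[OF W' U0])
    then have "u \<in> spanW M \<iota> W' U0" using e2 by simp
    moreover have "insert u U0 - {u} = U0" using insert(2) by blast
    ultimately have "u \<in> spanW M \<iota> W' (insert u U0 - {u})" by simp
    then show ?thesis by blast
  qed
qed

lemma gdim_less:
  assumes W: "submod M W" and W': "submod M W'" and WW: "W \<subset> W'"
    and ex: "\<exists>U. finite U \<and> U \<subseteq> mcarr M \<and> mcarr M \<subseteq> spanW M \<iota> W U"
  shows "gdim M \<iota> W' < gdim M \<iota> W"
proof -
  let ?P = "\<lambda>W n. \<exists>U. finite U \<and> U \<subseteq> mcarr M \<and> card U = n \<and> mcarr M \<subseteq> spanW M \<iota> W U"
  obtain U0 where U0: "finite U0" "U0 \<subseteq> mcarr M" "mcarr M \<subseteq> spanW M \<iota> W U0" using ex by blast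
  have "?P W (card U0)" using U0 by (intro exI[of _ U0]) simp
  then have "?P W (LEAST n. ?P W n)" by (rule LeastI)
  then have "?P W (gdim M \<iota> W)" unfolding gdim_def .
  then obtain U where U: "finite U" "U \<subseteq> mcarr M" "card U = gdim M \<iota> W" "mcarr M \<subseteq> spanW M \<iota> W U"
    by (elim exE conjE) (rule that)
  obtain w where w: "w \<in> W'" "w \<notin> W" using WW by blast
  have "w \<in> mcarr M" using w submodD(1)[OF W'] by blast
  then have wS: "w \<in> spanW M \<iota> W U" using U(4) by blast
  have WW': "W \<subseteq> W'" using WW by blast
  have "\<exists>u\<in>U. u \<in> spanW M \<iota> W' (U - {u})"
    by (rule key_exchange[OF W W' WW' U(1) U(2) wS w(2) w(1)])
  then obtain u where u: "u \<in> U" "u \<in> spanW M \<iota> W' (U - {u})" by blast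
  have U': "U - {u} \<subseteq> mcarr M" using U(2) by blast
  have "U \<subseteq> spanW M \<iota> W' (U - {u})"
  proof
    fix v assume v: "v \<in> U"
    show "v \<in> spanW M \<iota> W' (U - {u})"
    proof (cases "v = u")
      case True then show ?thesis using u by simp
    next
      case False
      then have "v \<in> U - {u}" using v by blast
      then have "mact M v (\<iota> 1) \<in> spanW M \<iota> W' (U - {u})" by (rule spanW.sp_gen)
      moreover have "mact M v (\<iota> 1) = v" using fdD(1)[OF FD] rone[OF RM] v U(2) by auto
      ultimately show ?thesis by simp
    qed
  qed
  then have "spanW M \<iota> W' U \<subseteq> spanW M \<iota> W' (U - {u})" by (rule span_closure[OF W' U'])
  moreover have "spanW M \<iota> W U \<subseteq> spanW M \<iota> W' U" by (rule span_mono) (use WW in auto)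
  ultimately have "mcarr M \<subseteq> spanW M \<iota> W' (U - {u})" using U(4) by blast
  then have "?P W' (card (U - {u}))" using U(1) U' by (intro exI[of _ "U - {u}"]) simp
  then have "gdim M \<iota> W' \<le> card (U - {u})" unfolding gdim_def by (rule Least_le)
  also have "\<dots> < card U" using U(1) u(1) by (rule card_Diff1_less)
  finally show ?thesis using U(3) by simp
qed

lemma sumact:
  assumes x: "x \<in> mcarr M" and fin: "finite B" and Z0: "mzero M \<in> Z"
    and Za: "\<And>a b. a \<in> Z \<Longrightarrow> b \<in> Z \<Longrightarrow> madd M a b \<in> Z"
    and Zf: "\<And>b. b \<in> B \<Longrightarrow> mact M x (f b) \<in> Z"
  shows "mact M x (sum f B) \<in> Z"
  using fin Zf
proof (induction B rule: finite_induct)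
  case empty
  then show ?case using ract0[OF RM x] Z0 by simp
next
  case (insert b F)
  have "mact M x (sum f (insert b F)) = madd M (mact M x (f b)) (mact M x (sum f F))"
    using insert(1,2) rd2[OF RM x] by simp
  moreover have "mact M x (f b) \<in> Z" using insert(4) by simp
  moreover have "mact M x (sum f F) \<in> Z" using insert(3,4) by simp
  ultimately show ?case using Za by simp
qed

lemma fin_span:
  assumes HM: "modlam M"
  shows "\<exists>V. finite V \<and> V \<subseteq> mcarr M \<and> mcarr M \<subseteq> spanW M \<iota> {mzero M} V"
proof -
  have "fingen M" using HM unfolding modlam_def by simp
  then obtain S where S1: "finite S" and S2: "S \<subseteq> mcarr M" and S3: "\<forall>A. submod M A \<and> S \<subseteq> A \<longrightarrow> A = mcarr M"
    unfolding fingen_def by (elim exE conjE)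
  obtain B where B1: "finite B" and B2: "\<forall>x. \<exists>c. x = (\<Sum>b\<in>B. \<iota> (c b) * b)"
    using fdD(5)[OF FD] by (elim exE conjE)
  note S = S1 S2 and B = B1
  define V where "V = (\<lambda>p. mact M (fst p) (snd p)) ` (S \<times> B)"
  define Sp where "Sp = spanW M \<iota> {mzero M} V"
  have Vfin: "finite V" unfolding V_def using S(1) B(1) by simp
  have Vc: "V \<subseteq> mcarr M" unfolding V_def using S(2) rs[OF RM] by auto
  have Spc: "Sp \<subseteq> mcarr M" unfolding Sp_def by (rule span_carr) (use Vc rz[OF RM] in auto)
  have Sp0: "mzero M \<in> Sp" unfolding Sp_def by (rule sp_base) simp
  have Spa: "\<And>a b. a \<in> Sp \<Longrightarrow> b \<in> Sp \<Longrightarrow> madd M a b \<in> Sp" unfolding Sp_def by (rule sp_add)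
  have inV: "mact M s r \<in> Sp" if s: "s \<in> S" for s r
  proof -
    obtain c where c: "r = (\<Sum>b\<in>B. \<iota> (c b) * b)" using B2 by (elim allE exE)
    have sc: "s \<in> mcarr M" using s S(2) by blast
    have inB: "mact M s (\<iota> (c b) * b) \<in> Sp" if b: "b \<in> B" for b
    proof -
      have "mact M s (\<iota> (c b) * b) = mact M (mact M s b) (\<iota> (c b))"
        using fdD(4)[OF FD] rmul[OF RM sc] by simp
      moreover have "mact M s b \<in> V" unfolding V_def using s b by force
      ultimately show ?thesis unfolding Sp_def by (simp add: sp_gen)
    qed
    have "mact M s (\<Sum>b\<in>B. \<iota> (c b) * b) \<in> Sp" by (rule sumact[OF sc B(1) Sp0 Spa inB])
    then show ?thesis using c by simp
  qed
  have Spr: "mact M x r \<in> Sp" if x: "x \<in> Sp" for x r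
    using x[unfolded Sp_def]
  proof induction
    case (sp_base x) then show ?case using r0act[OF RM] Sp0 by simp
  next
    case (sp_gen v a)
    then obtain s b where sb: "s \<in> S" "b \<in> B" "v = mact M s b" unfolding V_def by auto
    have sc: "s \<in> mcarr M" using sb S(2) by blast
    have "mact M (mact M v (\<iota> a)) r = mact M s (b * \<iota> a * r)"
      using sb rmul[OF RM sc] rmul[OF RM rs[OF RM sc]] by simp
    then show ?case using inV[OF sb(1)] by simp
  next
    case (sp_add x y)
    have "x \<in> mcarr M" "y \<in> mcarr M" using sp_add Spc unfolding Sp_def by auto
    then show ?case using rd1[OF RM] sp_add Spa by simp
  qed
  have "submod M Sp" by (rule submodI) (use Spc Sp0 Spa Spr in auto)
  moreover have "S \<subseteq> Sp"
  proof
    fix s assume s: "s \<in> S"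
    then have "mact M s 1 \<in> Sp" by (rule inV)
    then show "s \<in> Sp" using rone[OF RM] S(2) s by auto
  qed
  ultimately have "Sp = mcarr M" using S3 by simp
  then show ?thesis using Vfin Vc unfolding Sp_def by blast
qed

lemma noeth_max:
  assumes HM: "modlam M" and ne: "A0 \<in> F" and sub: "\<And>A. A \<in> F \<Longrightarrow> submod M A"
  shows "\<exists>T\<in>F. \<forall>A\<in>F. T \<subseteq> A \<longrightarrow> A = T"
proof -
  have "\<exists>x. x \<in> F \<and> (\<forall>y. y \<in> F \<longrightarrow> gdim M \<iota> x \<le> gdim M \<iota> y)"
    using ne by (rule ex_has_least_nat)
  then obtain T where T1: "T \<in> F" and T2: "\<And>A. A \<in> F \<Longrightarrow> gdim M \<iota> T \<le> gdim M \<iota> A"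
    by blast
  obtain V where V: "finite V" "V \<subseteq> mcarr M" "mcarr M \<subseteq> spanW M \<iota> {mzero M} V"
    using fin_span[OF HM] by blast
  have "{mzero M} \<subseteq> T" using submodD(2)[OF sub[OF T1]] by simp
  then have "spanW M \<iota> {mzero M} V \<subseteq> spanW M \<iota> T V" by (rule span_mono) simp
  then have "mcarr M \<subseteq> spanW M \<iota> T V" using V(3) by (rule order_trans[rotated])
  then have ex: "\<exists>U. finite U \<and> U \<subseteq> mcarr M \<and> mcarr M \<subseteq> spanW M \<iota> T U" using V(1,2) by blast
  have Amax: "A = T" if A1: "A \<in> F" and A2: "T \<subseteq> A" for A
  proof (rule ccontr)
    assume "A \<noteq> T"
    then have "T \<subset> A" using A2 by blast
    then have "gdim M \<iota> A < gdim M \<iota> T" by (rule gdim_less[OF sub[OF T1] sub[OF A1] _ ex])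
    then show False using T2[OF A1] by simp
  qed
  show ?thesis
  proof (rule bexI[OF _ T1], intro ballI impI)
    fix A assume "A \<in> F" "T \<subseteq> A"
    then show "A = T" by (rule Amax)
  qed
qed

end

lemma hull_submod:
  assumes RM: "rmodule M" and SC: "S \<subseteq> mcarr M"
  shows "submod M (mhull M S)"
proof (rule submodI)
  have "mcarr M \<in> {A. submod M A \<and> S \<subseteq> A}" using submod_carr[OF RM] SC by simp
  then show "mhull M S \<subseteq> mcarr M" unfolding mhull_def by (rule Inter_lower)
  show "mzero M \<in> mhull M S" unfolding mhull_def
  proof (rule InterI)
    fix A assume "A \<in> {A. submod M A \<and> S \<subseteq> A}"
    then have "submod M A" by simp
    then show "mzero M \<in> A" by (rule submodD(2))
  qed
  show "madd M x y \<in> mhull M S" if xy: "x \<in> mhull M S" "y \<in> mhull M S" for x y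
    unfolding mhull_def
  proof (rule InterI)
    fix A assume A: "A \<in> {A. submod M A \<and> S \<subseteq> A}"
    then have "x \<in> A" "y \<in> A" using xy unfolding mhull_def by blast+
    moreover have "submod M A" using A by simp
    ultimately show "madd M x y \<in> A" using submodD(3) by metis
  qed
  show "mact M x r \<in> mhull M S" if xy: "x \<in> mhull M S" for x r
    unfolding mhull_def
  proof (rule InterI)
    fix A assume A: "A \<in> {A. submod M A \<and> S \<subseteq> A}"
    then have "x \<in> A" using xy unfolding mhull_def by blast
    moreover have "submod M A" using A by simp
    ultimately show "mact M x r \<in> A" using submodD(4) by metis
  qed
qed

lemma hull_sub: "S \<subseteq> mhull M S" unfolding mhull_def by blast

lemma hull_least: "submod M A \<Longrightarrow> S \<subseteq> A \<Longrightarrow> mhull M S \<subseteq> A" unfolding mhull_def by blast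

lemma modlam_restr:
  fixes M :: "('m,'r::ring_1) rmod" and \<iota> :: "'k::field \<Rightarrow> 'r"
  assumes FD: "fd_algebra \<iota>" and HM: "modlam M" and X: "submod M X"
  shows "modlam (restr M X)"
proof -
  have RM: "rmodule M" using HM unfolding modlam_def by simp
  define F where "F = {A. \<exists>S. A = mhull M S \<and> finite S \<and> S \<subseteq> X}"
  have F0: "mhull M {} \<in> F" unfolding F_def by (intro CollectI exI[of _ "{}"]) simp
  have XC: "X \<subseteq> mcarr M" by (rule submodD(1)[OF X])
  have Fs: "submod M A" if A: "A \<in> F" for A
  proof -
    obtain S where S: "A = mhull M S" "finite S" "S \<subseteq> X"
      using A unfolding F_def by (elim CollectE exE conjE) (rule that)
    have "S \<subseteq> mcarr M" using S(3) XC by (rule subset_trans)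
    then show ?thesis unfolding S(1) by (rule hull_submod[OF RM])
  qed
  have "\<exists>T\<in>F. \<forall>A\<in>F. T \<subseteq> A \<longrightarrow> A = T"
    by (rule noeth_max[OF RM FD HM F0 Fs])
  then obtain H where H1: "H \<in> F" and H2: "\<forall>A\<in>F. H \<subseteq> A \<longrightarrow> A = H"
    apply (elim bexE) apply (rule that) apply assumption+ done
  from H1 obtain S0 where S0: "H = mhull M S0" "finite S0" "S0 \<subseteq> X"
    unfolding F_def by (elim CollectE exE conjE) (rule that)
  have HX: "H \<subseteq> X" unfolding S0(1) by (rule hull_least[OF X S0(3)])
  have "X \<subseteq> H"
  proof
    fix x assume x: "x \<in> X"
    have "mhull M (insert x S0) \<in> F" unfolding F_def
      using S0(2,3) x by (intro CollectI exI[of _ "insert x S0"]) simp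
    moreover have "H \<subseteq> mhull M (insert x S0)"
    proof -
      have ic: "insert x S0 \<subseteq> mcarr M" using S0(3) x XC by blast
      have "S0 \<subseteq> insert x S0" by blast
      also have "\<dots> \<subseteq> mhull M (insert x S0)" by (rule hull_sub)
      finally have "S0 \<subseteq> mhull M (insert x S0)" .
      then show ?thesis unfolding S0(1) by (rule hull_least[OF hull_submod[OF RM ic]])
    qed
    ultimately have "mhull M (insert x S0) = H" by (rule H2[rule_format])
    then show "x \<in> H" using hull_sub[of "insert x S0" M] by simp
  qed
  then have XH: "X = H" using HX by (rule subset_antisym)
  have "fingen (restr M X)" unfolding fingen_def
  proof (intro exI conjI allI impI)
    show "finite S0" by (rule S0(2))
    show "S0 \<subseteq> mcarr (restr M X)" using S0(3) by simp
    fix A assume A: "submod (restr M X) A \<and> S0 \<subseteq> A"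
    then have A1: "submod M A" and A2: "A \<subseteq> X" using submod_restr[OF X] by blast+
    have "mhull M S0 \<subseteq> A" using hull_least[OF A1] A by blast
    then show "A = mcarr (restr M X)" using XH S0(1) A2 by simp
  qed
  then show ?thesis unfolding modlam_def using rmodule_restr[OF RM X] by simp
qed

lemma strictD:
  assumes "strict_sub G M A"
  shows "submod M A" "restr M A \<in> G"
    and "submod M B \<Longrightarrow> restr M B \<in> G \<Longrightarrow> restr M (A \<inter> B) \<in> G"
  using assms unfolding strict_sub_def subobj_def by blast+

lemma strictI:
  assumes "submod M A" "restr M A \<in> G"
    and "\<And>B. submod M B \<Longrightarrow> restr M B \<in> G \<Longrightarrow> restr M (A \<inter> B) \<in> G"
  shows "strict_sub G M A"
  using assms unfolding strict_sub_def subobj_def by blast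

lemma quot_mapD:
  assumes "quot_map M F q T"
  shows "hom M F q" "q ` mcarr M = mcarr F" "kern M F q = T"
  using assms unfolding quot_map_def by blast+

lemma strict_morD:
  assumes "strict_mor G A B f"
  shows "A \<in> G" "B \<in> G" "hom A B f" "strict_sub G A (kern A B f)" "strict_sub G B (f ` mcarr A)"
  using assms unfolding strict_mor_def by blast+

lemma tcD:
  assumes "torsion_class G"
  shows tc_modlam: "M \<in> G \<Longrightarrow> modlam M"
    and tc_quot: "M \<in> G \<Longrightarrow> modlam N \<Longrightarrow> hom M N f \<Longrightarrow> f ` mcarr M = mcarr N \<Longrightarrow> N \<in> G"
    and tc_ext: "modlam A \<Longrightarrow> modlam B \<Longrightarrow> modlam C \<Longrightarrow> hom A B i \<Longrightarrow> inj_on i (mcarr A) \<Longrightarrow>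
        hom B C p \<Longrightarrow> p ` mcarr B = mcarr C \<Longrightarrow> i ` mcarr A = kern B C p \<Longrightarrow> A \<in> G \<Longrightarrow> C \<in> G \<Longrightarrow> B \<in> G"
proof -
  note T = assms[unfolded torsion_class_def]
  have m: "\<forall>M\<in>G. modlam M" using T by (elim conjE)
  show "M \<in> G \<Longrightarrow> modlam M" using m by simp
  have q: "\<forall>M N f. M \<in> G \<and> modlam N \<and> hom M N f \<and> f ` mcarr M = mcarr N \<longrightarrow> N \<in> G"
    using T by (elim conjE)
  show "M \<in> G \<Longrightarrow> modlam N \<Longrightarrow> hom M N f \<Longrightarrow> f ` mcarr M = mcarr N \<Longrightarrow> N \<in> G"
    using q[rule_format, of M N f] by simp
  have e: "\<forall>A B C i p. modlam A \<and> modlam B \<and> modlam C \<and> hom A B i \<and> inj_on i (mcarr A) \<and>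
        hom B C p \<and> p ` mcarr B = mcarr C \<and> i ` mcarr A = kern B C p \<and> A \<in> G \<and> C \<in> G
        \<longrightarrow> B \<in> G"
    using T by (elim conjE)
  show "modlam A \<Longrightarrow> modlam B \<Longrightarrow> modlam C \<Longrightarrow> hom A B i \<Longrightarrow> inj_on i (mcarr A) \<Longrightarrow>
        hom B C p \<Longrightarrow> p ` mcarr B = mcarr C \<Longrightarrow> i ` mcarr A = kern B C p \<Longrightarrow> A \<in> G \<Longrightarrow> C \<in> G \<Longrightarrow> B \<in> G"
    using e[rule_format, of A B C i p] by simp
qed

lemma ptD:
  assumes "pseudo_torsion G P"
  shows pt_ne: "P \<noteq> {}" and pt_sub: "P \<subseteq> G"
    and pt_quot: "B \<in> P \<Longrightarrow> modlam N \<Longrightarrow> strict_sub G B A \<Longrightarrow> quot_map B N q A \<Longrightarrow> N \<in> P"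
    and pt_ext: "strict_exact G A1 B1 C1 i p \<Longrightarrow> A1 \<in> P \<Longrightarrow> C1 \<in> P \<Longrightarrow> B1 \<in> P"
proof -
  note T = assms[unfolded pseudo_torsion_def]
  show "P \<noteq> {}" using T by (elim conjE)
  show "P \<subseteq> G" using T by (elim conjE)
  have q: "\<forall>B N q A. B \<in> P \<and> modlam N \<and> strict_sub G B A \<and> quot_map B N q A \<longrightarrow> N \<in> P"
    using T by (elim conjE)
  show "B \<in> P \<Longrightarrow> modlam N \<Longrightarrow> strict_sub G B A \<Longrightarrow> quot_map B N q A \<Longrightarrow> N \<in> P"
    using q[rule_format, of B N A q] by simp
  have e: "\<forall>A B C i p. strict_exact G A B C i p \<and> A \<in> P \<and> C \<in> P \<longrightarrow> B \<in> P"
    using T by (elim conjE)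
  show "strict_exact G A1 B1 C1 i p \<Longrightarrow> A1 \<in> P \<Longrightarrow> C1 \<in> P \<Longrightarrow> B1 \<in> P"
    using e[rule_format, of A1 B1 C1 i p] by simp
qed

lemma kern_restr_target: "kern M (restr N D) f = kern M N f"
  unfolding kern_def by simp

lemma hom_restr:
  assumes "hom M N f" "X \<subseteq> mcarr M" "\<And>x. x \<in> X \<Longrightarrow> f x \<in> D"
  shows "hom (restr M X) (restr N D) f"
proof (rule homI)
  fix x assume "x \<in> mcarr (restr M X)"
  then show "f x \<in> mcarr (restr N D)" using assms(3) by simp
next
  fix x y assume "x \<in> mcarr (restr M X)" "y \<in> mcarr (restr M X)"
  then show "f (madd (restr M X) x y) = madd (restr N D) (f x) (f y)"
    using homD(2)[OF assms(1)] assms(2) by auto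
next
  fix x r assume "x \<in> mcarr (restr M X)"
  then show "f (mact (restr M X) x r) = mact (restr N D) (f x) r"
    using homD(3)[OF assms(1)] assms(2) by auto
qed

lemma hom_restr1:
  assumes "hom M N f" "X \<subseteq> mcarr M"
  shows "hom (restr M X) N f"
  using hom_restr[OF assms, of "mcarr N"] homD(1)[OF assms(1)] assms(2) by auto

lemma strict_Int:
  assumes A: "strict_sub G M A" and B: "submod M B" "restr M B \<in> G"
  shows "strict_sub G (restr M B) (A \<inter> B)"
proof (rule strictI)
  show "submod (restr M B) (A \<inter> B)"
    using submod_restr[OF B(1)] submod_Int[OF strictD(1)[OF A] B(1)] by blast
  show "restr (restr M B) (A \<inter> B) \<in> G" using strictD(3)[OF A B] by simp
  fix B' assume B': "submod (restr M B) B'" "restr (restr M B) B' \<in> G"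
  then have "submod M B'" "B' \<subseteq> B" "restr M B' \<in> G" using submod_restr[OF B(1)] by auto
  then have "restr M (A \<inter> B') \<in> G" using strictD(3)[OF A] by blast
  moreover have "A \<inter> B \<inter> B' = A \<inter> B'" using \<open>B' \<subseteq> B\<close> by blast
  ultimately show "restr (restr M B) (A \<inter> B \<inter> B') \<in> G" by simp
qed

lemma strict_trans:
  assumes C: "strict_sub G M C" and A: "strict_sub G (restr M C) A"
  shows "strict_sub G M A"
proof (rule strictI)
  have A1: "submod M A" "A \<subseteq> C" using strictD(1)[OF A] submod_restr[OF strictD(1)[OF C]] by auto
  then show "submod M A" by simp
  show "restr M A \<in> G" using strictD(2)[OF A] by simp
  fix B assume B: "submod M B" "restr M B \<in> G"
  have "submod (restr M C) (C \<inter> B)"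
    using submod_restr[OF strictD(1)[OF C]] submod_Int[OF strictD(1)[OF C] B(1)] by blast
  moreover have "restr (restr M C) (C \<inter> B) \<in> G" using strictD(3)[OF C B] by simp
  ultimately
  have "restr (restr M C) (A \<inter> (C \<inter> B)) \<in> G" by (rule strictD(3)[OF A])
  moreover have "A \<inter> (C \<inter> B) = A \<inter> B" using A1(2) by blast
  ultimately show "restr M (A \<inter> B) \<in> G" by simp
qed

context
  fixes G :: "('m,'r::ring_1) rmod set" and \<iota> :: "'k::field \<Rightarrow> 'r"
  assumes TC: "torsion_class G" and FD: "fd_algebra \<iota>"
begin

lemma EXT:
  assumes HM: "modlam M" and HF: "modlam F" and h: "hom M F q" and X: "submod M X"
    and G1: "restr M (X \<inter> kern M F q) \<in> G" and G2: "restr F (q ` X) \<in> G"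
  shows "restr M X \<in> G"
proof -
  have RM: "rmodule M" and RF: "rmodule F" using HM HF unfolding modlam_def by simp_all
  have XC: "X \<subseteq> mcarr M" by (rule submodD(1)[OF X])
  have XK: "submod M (X \<inter> kern M F q)" by (rule submod_Int[OF X submod_kern[OF RM RF h]])
  have mA: "modlam (restr M (X \<inter> kern M F q))" by (rule modlam_restr[OF FD HM XK])
  have mB: "modlam (restr M X)" by (rule modlam_restr[OF FD HM X])
  have mC: "modlam (restr F (q ` X))" by (rule tc_modlam[OF TC G2])
  have h1: "hom (restr M (X \<inter> kern M F q)) (restr M X) id"
    by (rule homI) auto
  have h2: "hom (restr M X) (restr F (q ` X)) q"
    by (rule hom_restr[OF h XC]) simp
  have k: "id ` mcarr (restr M (X \<inter> kern M F q)) = kern (restr M X) (restr F (q ` X)) q"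
    using XC unfolding kern_def by auto
  show ?thesis
    by (rule tc_ext[OF TC mA mB mC h1 _ h2 _ k G1 G2]) simp_all
qed

lemma QUO:
  assumes HM: "modlam M" and HF: "modlam F" and h: "hom M F q" and X: "submod M X"
    and G1: "restr M X \<in> G"
  shows "restr F (q ` X) \<in> G"
proof -
  have RM: "rmodule M" and RF: "rmodule F" using HM HF unfolding modlam_def by simp_all
  have XC: "X \<subseteq> mcarr M" by (rule submodD(1)[OF X])
  have mN: "modlam (restr F (q ` X))" by (rule modlam_restr[OF FD HF submod_image[OF RM RF h X]])
  have h2: "hom (restr M X) (restr F (q ` X)) q"
    by (rule hom_restr[OF h XC]) simp
  show ?thesis by (rule tc_quot[OF TC G1 mN h2]) simp
qed

lemma quot_surj_pre:
  assumes "quot_map M F q T" "D \<subseteq> mcarr F"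
  shows "q ` {x \<in> mcarr M. q x \<in> D} = D"
proof
  show "q ` {x \<in> mcarr M. q x \<in> D} \<subseteq> D" by blast
  show "D \<subseteq> q ` {x \<in> mcarr M. q x \<in> D}"
  proof
    fix d assume d: "d \<in> D"
    then have "d \<in> q ` mcarr M" using assms quot_mapD(2)[OF assms(1)] by blast
    then obtain x where x: "x \<in> mcarr M" "d = q x" by blast
    then show "d \<in> q ` {x \<in> mcarr M. q x \<in> D}" using d by blast
  qed
qed

lemma pre_subobj:
  assumes HM: "modlam M" and HF: "modlam F" and qm: "quot_map M F q T" and GT: "restr M T \<in> G"
    and D: "submod F D" "restr F D \<in> G"
  shows "submod M {x \<in> mcarr M. q x \<in> D}" "restr M {x \<in> mcarr M. q x \<in> D} \<in> G"
proof -
  have RM: "rmodule M" and RF: "rmodule F" using HM HF unfolding modlam_def by simp_all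
  note Q = quot_mapD[OF qm]
  show S: "submod M {x \<in> mcarr M. q x \<in> D}" by (rule submod_preimage[OF RM RF Q(1) D(1)])
  have "mzero F \<in> D" by (rule submodD(2)[OF D(1)])
  then have "{x \<in> mcarr M. q x \<in> D} \<inter> kern M F q = T" using Q(3) unfolding kern_def by auto
  then have G1: "restr M ({x \<in> mcarr M. q x \<in> D} \<inter> kern M F q) \<in> G" using GT by simp
  have "q ` {x \<in> mcarr M. q x \<in> D} = D" by (rule quot_surj_pre[OF qm submodD(1)[OF D(1)]])
  then have G2: "restr F (q ` {x \<in> mcarr M. q x \<in> D}) \<in> G" using D(2) by simp
  show "restr M {x \<in> mcarr M. q x \<in> D} \<in> G" by (rule EXT[OF HM HF Q(1) S G1 G2])
qed

lemma strict_image: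
  assumes HM: "modlam M" and HF: "modlam F" and qm: "quot_map M F q T" and GT: "restr M T \<in> G"
    and Y: "strict_sub G M Y"
  shows "strict_sub G F (q ` Y)"
proof -
  have RM: "rmodule M" and RF: "rmodule F" using HM HF unfolding modlam_def by simp_all
  note Q = quot_mapD[OF qm]
  have YC: "Y \<subseteq> mcarr M" by (rule submodD(1)[OF strictD(1)[OF Y]])
  show ?thesis
  proof (rule strictI)
    show "submod F (q ` Y)" by (rule submod_image[OF RM RF Q(1) strictD(1)[OF Y]])
    show "restr F (q ` Y) \<in> G" by (rule QUO[OF HM HF Q(1) strictD(1)[OF Y] strictD(2)[OF Y]])
    fix D assume D: "submod F D" "restr F D \<in> G"
    let ?P = "{x \<in> mcarr M. q x \<in> D}"
    have P: "submod M ?P" "restr M ?P \<in> G" by (rule pre_subobj[OF HM HF qm GT D])+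
    have "restr M (Y \<inter> ?P) \<in> G" by (rule strictD(3)[OF Y P])
    then have "restr F (q ` (Y \<inter> ?P)) \<in> G"
      by (rule QUO[OF HM HF Q(1) submod_Int[OF strictD(1)[OF Y] P(1)]])
    moreover have "q ` (Y \<inter> ?P) = q ` Y \<inter> D" using YC by auto
    ultimately show "restr F (q ` Y \<inter> D) \<in> G" by simp
  qed
qed

lemma strict_preimage:
  assumes HM: "modlam M" and HF: "modlam F" and qm: "quot_map M F q T" and T: "strict_sub G M T"
    and D: "strict_sub G F D"
  shows "strict_sub G M {x \<in> mcarr M. q x \<in> D}"
proof -
  have RM: "rmodule M" and RF: "rmodule F" using HM HF unfolding modlam_def by simp_all
  note Q = quot_mapD[OF qm]
  let ?C = "{x \<in> mcarr M. q x \<in> D}"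
  have C: "submod M ?C" "restr M ?C \<in> G" by (rule pre_subobj[OF HM HF qm strictD(2)[OF T] strictD(1,2)[OF D]])+
  have TC': "T \<subseteq> ?C" using Q(3) submodD(2)[OF strictD(1)[OF D]] unfolding kern_def by auto
  show ?thesis
  proof (rule strictI[OF C])
    fix B assume B: "submod M B" "restr M B \<in> G"
    have BC: "B \<subseteq> mcarr M" by (rule submodD(1)[OF B(1)])
    have "?C \<inter> B \<inter> kern M F q = T \<inter> B" using TC' Q(3) by auto
    then have G1: "restr M (?C \<inter> B \<inter> kern M F q) \<in> G" using strictD(3)[OF T B] by simp
    have qB: "submod F (q ` B)" "restr F (q ` B) \<in> G"
      by (rule submod_image[OF RM RF Q(1) B(1)]) (rule QUO[OF HM HF Q(1) B])
    have "q ` (?C \<inter> B) = D \<inter> q ` B" using BC by auto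
    moreover have "restr F (D \<inter> q ` B) \<in> G" by (rule strictD(3)[OF D qB])
    ultimately have G2: "restr F (q ` (?C \<inter> B)) \<in> G" by simp
    show "restr M (?C \<inter> B) \<in> G" by (rule EXT[OF HM HF Q(1) submod_Int[OF C(1) B(1)] G1 G2])
  qed
qed

end

lemma tors_partD:
  assumes "tors_part G P Q M T"
  shows "strict_sub G M T" "restr M T \<in> P" "\<exists>F q. modlam F \<and> quot_map M F q T \<and> F \<in> Q"
  using assms unfolding tors_part_def by blast+

lemma perpD:
  assumes "F \<in> perp G P"
  shows "F \<in> G" "X \<in> P \<Longrightarrow> strict_mor G X F f \<Longrightarrow> x \<in> mcarr X \<Longrightarrow> f x = mzero F"
  using assms unfolding perp_def by blast+

context
  fixes G :: "('m,'r::ring_1) rmod set" and \<iota> :: "'k::field \<Rightarrow> 'r" and P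
  assumes TC: "torsion_class G" and FD: "fd_algebra \<iota>" and PT: "pseudo_torsion G P"
begin

lemma PG: "X \<in> P \<Longrightarrow> X \<in> G" using pt_sub[OF PT] by blast

lemma tors_max:
  assumes N: "N \<in> G" and TP: "tors_part G P (perp G P) N T" and Y: "strict_sub G N Y"
    and YP: "restr N Y \<in> P"
  shows "Y \<subseteq> T"
proof -
  have HN: "modlam N" by (rule tc_modlam[OF TC N])
  have T: "strict_sub G N T" by (rule tors_partD(1)[OF TP])
  obtain F q where F: "modlam F" "quot_map N F q T" "F \<in> perp G P"
    using tors_partD(3)[OF TP] by (elim exE conjE)
  note Q = quot_mapD[OF F(2)]
  have YC: "Y \<subseteq> mcarr N" by (rule submodD(1)[OF strictD(1)[OF Y]])
  have sm: "strict_mor G (restr N Y) F q" unfolding strict_mor_def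
  proof (intro conjI)
    show "restr N Y \<in> G" using YP by (rule PG)
    show "F \<in> G" by (rule perpD(1)[OF F(3)])
    show "hom (restr N Y) F q" by (rule hom_restr1[OF Q(1) YC])
    have "kern (restr N Y) F q = T \<inter> Y" using Q(3) YC unfolding kern_def by auto
    moreover have "strict_sub G (restr N Y) (T \<inter> Y)"
      by (rule strict_Int[OF T strictD(1,2)[OF Y]])
    ultimately show "strict_sub G (restr N Y) (kern (restr N Y) F q)" by simp
    have "strict_sub G F (q ` Y)"
      by (rule strict_image[OF TC FD HN F(1) F(2) strictD(2)[OF T] Y])
    then show "strict_sub G F (q ` mcarr (restr N Y))" by simp
  qed
  show ?thesis
  proof
    fix y assume y: "y \<in> Y"
    have "q y = mzero F" by (rule perpD(2)[OF F(3) YP sm]) (use y in simp)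
    then show "y \<in> T" using Q(3) y YC unfolding kern_def by auto
  qed
qed

lemma tors_unique:
  assumes N: "N \<in> G" and T1: "tors_part G P (perp G P) N T1" and T2: "tors_part G P (perp G P) N T2"
  shows "T1 = T2"
proof
  show "T1 \<subseteq> T2" by (rule tors_max[OF N T2 tors_partD(1,2)[OF T1]])
  show "T2 \<subseteq> T1" by (rule tors_max[OF N T1 tors_partD(1,2)[OF T2]])
qed

lemma zero_in_P:
  assumes M: "M \<in> G"
  shows "restr M {mzero M} \<in> P"
proof -
  have HM: "modlam M" by (rule tc_modlam[OF TC M])
  have RM: "rmodule M" using HM unfolding modlam_def by simp
  obtain X0 where X0: "X0 \<in> P" using pt_ne[OF PT] by blast
  have HX: "modlam X0" by (rule tc_modlam[OF TC PG[OF X0]])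
  have RX: "rmodule X0" using HX unfolding modlam_def by simp
  have m: "modlam (restr M {mzero M})" by (rule modlam_restr[OF FD HM submod_zero[OF RM]])
  have s: "strict_sub G X0 (mcarr X0)"
  proof (rule strictI)
    show "submod X0 (mcarr X0)" by (rule submod_carr[OF RX])
    show "restr X0 (mcarr X0) \<in> G" using PG[OF X0] by simp
    fix B assume B: "submod X0 B" "restr X0 B \<in> G"
    have "mcarr X0 \<inter> B = B" using submodD(1)[OF B(1)] by blast
    then show "restr X0 (mcarr X0 \<inter> B) \<in> G" using B(2) by simp
  qed
  have qm: "quot_map X0 (restr M {mzero M}) (\<lambda>_. mzero M) (mcarr X0)" unfolding quot_map_def
  proof (intro conjI)
    show "hom X0 (restr M {mzero M}) (\<lambda>_. mzero M)"
      by (rule homI) (simp_all add: rlz[OF RM rz[OF RM]] r0act[OF RM])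
    show "(\<lambda>_. mzero M) ` mcarr X0 = mcarr (restr M {mzero M})" using rz[OF RX] by auto
    show "kern X0 (restr M {mzero M}) (\<lambda>_. mzero M) = mcarr X0" unfolding kern_def by simp
  qed
  show ?thesis by (rule pt_quot[OF PT X0 m s qm])
qed

lemma tors_exists:
  assumes M: "M \<in> G"
  shows "\<exists>T. tors_part G P (perp G P) M T"
proof -
  have HM: "modlam M" by (rule tc_modlam[OF TC M])
  have RM: "rmodule M" using HM unfolding modlam_def by simp
  define Fam where "Fam = {A. strict_sub G M A \<and> restr M A \<in> P}"
  have z: "{mzero M} \<in> Fam" unfolding Fam_def
  proof (intro CollectI conjI)
    show zP: "restr M {mzero M} \<in> P" by (rule zero_in_P[OF M])
    show "strict_sub G M {mzero M}"
    proof (rule strictI)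
      show "submod M {mzero M}" by (rule submod_zero[OF RM])
      show "restr M {mzero M} \<in> G" using zP by (rule PG)
      fix B assume B: "submod M B" "restr M B \<in> G"
      have "{mzero M} \<inter> B = {mzero M}" using submodD(2)[OF B(1)] by blast
      then show "restr M ({mzero M} \<inter> B) \<in> G" using PG[OF zP] by simp
    qed
  qed
  have Fs: "submod M A" if "A \<in> Fam" for A using that unfolding Fam_def by (auto dest: strictD(1))
  have "\<exists>T\<in>Fam. \<forall>A\<in>Fam. T \<subseteq> A \<longrightarrow> A = T" by (rule noeth_max[OF RM FD HM z Fs])
  then obtain T where T1: "T \<in> Fam" and T2: "\<forall>A\<in>Fam. T \<subseteq> A \<longrightarrow> A = T"
    apply (elim bexE) apply (rule that) apply assumption+ done
  have Ts: "strict_sub G M T" and TP: "restr M T \<in> P" using T1 unfolding Fam_def by simp_all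
  have ST: "submod M T" by (rule strictD(1)[OF Ts])
  let ?F = "QuotM M T" and ?q = "qmap M T"
  have qm: "quot_map M ?F ?q T" by (rule QuotM_quot_map[OF RM ST])
  have HF: "modlam ?F" by (rule QuotM_modlam[OF RM ST HM])
  have RF: "rmodule ?F" using HF unfolding modlam_def by simp
  note Q = quot_mapD[OF qm]
  have FG: "?F \<in> G"
  proof -
    have "restr ?F (?q ` mcarr M) \<in> G"
      by (rule QUO[OF TC FD HM HF Q(1) submod_carr[OF RM]]) (use M in simp)
    then show ?thesis using Q(2) by simp
  qed
  have Fperp: "?F \<in> perp G P" unfolding perp_def
  proof (intro CollectI conjI FG allI impI ballI)
    fix X' f x assume a: "X' \<in> P \<and> strict_mor G X' ?F f" and x: "x \<in> mcarr X'"
    have X': "X' \<in> P" and sm: "strict_mor G X' ?F f" using a by simp_all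
    note S = strict_morD[OF sm]
    have HX: "modlam X'" by (rule tc_modlam[OF TC S(1)])
    have RX: "rmodule X'" using HX unfolding modlam_def by simp
    let ?I = "f ` mcarr X'"
    have SI: "submod ?F ?I" by (rule strictD(1)[OF S(5)])
    have IC: "?I \<subseteq> mcarr ?F" by (rule submodD(1)[OF SI])
    let ?C = "{y \<in> mcarr M. ?q y \<in> ?I}"
    have Cs: "strict_sub G M ?C" by (rule strict_preimage[OF TC FD HM HF qm Ts S(5)])
    have SC: "submod M ?C" by (rule strictD(1)[OF Cs])
    have CC: "?C \<subseteq> mcarr M" by (rule submodD(1)[OF SC])
    have IP: "restr ?F ?I \<in> P"
    proof (rule pt_quot[OF PT X' modlam_restr[OF FD HF SI] S(4)])
      show "quot_map X' (restr ?F ?I) f (kern X' ?F f)" unfolding quot_map_def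
      proof (intro conjI)
        show "hom X' (restr ?F ?I) f" using hom_restr[OF S(3), of "mcarr X'" ?I] by simp
        show "f ` mcarr X' = mcarr (restr ?F ?I)" by simp
        show "kern X' (restr ?F ?I) f = kern X' ?F f" by (rule kern_restr_target)
      qed
    qed
    have z0: "mzero ?F \<in> ?I" by (rule submodD(2)[OF SI])
    have TC': "T \<subseteq> ?C"
    proof
      fix t assume t: "t \<in> T"
      then have "t \<in> kern M ?F ?q" using Q(3) by simp
      then show "t \<in> ?C" using z0 unfolding kern_def by simp
    qed
    have CP: "restr M ?C \<in> P"
    proof (rule pt_ext[OF PT _ TP IP])
      show "strict_exact G (restr M T) (restr M ?C) (restr ?F ?I) id ?q" unfolding strict_exact_def
      proof (intro conjI)
        show "restr M T \<in> G" using TP by (rule PG)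
        show "restr M ?C \<in> G" by (rule strictD(2)[OF Cs])
        show "restr ?F ?I \<in> G" using IP by (rule PG)
        have hid: "hom M M id" by (rule homI) simp_all
        show "hom (restr M T) (restr M ?C) id"
          by (rule hom_restr[OF hid submodD(1)[OF ST]]) (use TC' in auto)
        show "inj_on id (mcarr (restr M T))" by simp
        show "hom (restr M ?C) (restr ?F ?I) ?q" by (rule hom_restr[OF Q(1) CC]) simp
        show "?q ` mcarr (restr M ?C) = mcarr (restr ?F ?I)"
          using quot_surj_pre[OF TC FD qm IC] by simp
        show "id ` mcarr (restr M T) = kern (restr M ?C) (restr ?F ?I) ?q"
          using Q(3) TC' unfolding kern_def by auto
        have "strict_sub G (restr M ?C) (T \<inter> ?C)" by (rule strict_Int[OF Ts SC strictD(2)[OF Cs]])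
        moreover have "T \<inter> ?C = T" using TC' by blast
        ultimately show "strict_sub G (restr M ?C) (id ` mcarr (restr M T))" by simp
      qed
    qed
    have "?C \<in> Fam" unfolding Fam_def using Cs CP by simp
    then have CT: "?C = T" using T2 TC' by simp
    have "f x \<in> ?I" using x by simp
    then have "f x \<in> mcarr ?F" using IC by blast
    then obtain m where m: "m \<in> mcarr M" "f x = ?q m" using Q(2) by auto
    then have "m \<in> ?C" using \<open>f x \<in> ?I\<close> by simp
    then have "m \<in> kern M ?F ?q" using CT Q(3) by simp
    then show "f x = mzero ?F" using m unfolding kern_def by simp
  qed
  have "tors_part G P (perp G P) M T" unfolding tors_part_def
    using Ts TP qm HF Fperp by blast
  then show ?thesis by blast
qed

end

context
  fixes G :: "('m,'r::ring_1) rmod set" and \<iota> :: "'k::field \<Rightarrow> 'r" and P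
  assumes TC: "torsion_class G" and FD: "fd_algebra \<iota>" and PT: "pseudo_torsion G P"
begin

lemma part2:
  assumes sm: "strict_mor G M N \<phi>" and TMp: "tors_part G P (perp G P) M TM"
    and TNp: "tors_part G P (perp G P) N TN"
  shows "\<phi> ` TM \<subseteq> TN \<and> strict_mor G (restr M TM) (restr N TN) \<phi> \<and>
    (\<forall>FM FN qM qN. modlam FM \<and> quot_map M FM qM TM \<and> modlam FN \<and> quot_map N FN qN TN
       \<longrightarrow> (\<exists>\<psi>. strict_mor G FM FN \<psi> \<and> (\<forall>x\<in>mcarr M. \<psi> (qM x) = qN (\<phi> x))))"
proof -
  note S = strict_morD[OF sm]
  have HM: "modlam M" by (rule tc_modlam[OF TC S(1)])
  have HN: "modlam N" by (rule tc_modlam[OF TC S(2)])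
  have RM: "rmodule M" using HM unfolding modlam_def by simp
  have RN: "rmodule N" using HN unfolding modlam_def by simp
  let ?K = "kern M N \<phi>" and ?I = "\<phi> ` mcarr M"
  have Ks: "strict_sub G M ?K" by (rule S(4))
  have Is: "strict_sub G N ?I" by (rule S(5))
  have SI: "submod N ?I" by (rule strictD(1)[OF Is])
  have HI: "modlam (restr N ?I)" by (rule modlam_restr[OF FD HN SI])
  have qI: "quot_map M (restr N ?I) \<phi> ?K" unfolding quot_map_def
  proof (intro conjI)
    show "hom M (restr N ?I) \<phi>" using hom_restr[OF S(3), of "mcarr M" ?I] by simp
    show "\<phi> ` mcarr M = mcarr (restr N ?I)" by simp
    show "kern M (restr N ?I) \<phi> = ?K" by (rule kern_restr_target)
  qed
  have TMs: "strict_sub G M TM" by (rule tors_partD(1)[OF TMp])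
  have TMP: "restr M TM \<in> P" by (rule tors_partD(2)[OF TMp])
  have TNs: "strict_sub G N TN" by (rule tors_partD(1)[OF TNp])
  have STM: "submod M TM" by (rule strictD(1)[OF TMs])
  have TMC: "TM \<subseteq> mcarr M" by (rule submodD(1)[OF STM])
  have STN: "submod N TN" by (rule strictD(1)[OF TNs])
  have TNC: "TN \<subseteq> mcarr N" by (rule submodD(1)[OF STN])
  have c1a: "strict_sub G (restr N ?I) (\<phi> ` TM)"
    by (rule strict_image[OF TC FD HM HI qI strictD(2)[OF Ks] TMs])
  have c1b: "strict_sub G N (\<phi> ` TM)" by (rule strict_trans[OF Is c1a])
  have KTM: "kern (restr M TM) (restr N (\<phi> ` TM)) \<phi> = ?K \<inter> TM" using TMC unfolding kern_def by auto
  have c1c: "restr N (\<phi> ` TM) \<in> P"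
  proof (rule pt_quot[OF PT TMP])
    show "modlam (restr N (\<phi> ` TM))" by (rule modlam_restr[OF FD HN strictD(1)[OF c1b]])
    have "strict_sub G (restr M TM) (?K \<inter> TM)" by (rule strict_Int[OF Ks STM strictD(2)[OF TMs]])
    then show "strict_sub G (restr M TM) (kern (restr M TM) (restr N (\<phi> ` TM)) \<phi>)" using KTM by simp
    show "quot_map (restr M TM) (restr N (\<phi> ` TM)) \<phi> (kern (restr M TM) (restr N (\<phi> ` TM)) \<phi>)"
      unfolding quot_map_def
    proof (intro conjI)
      show "hom (restr M TM) (restr N (\<phi> ` TM)) \<phi>" by (rule hom_restr[OF S(3) TMC]) simp
    qed simp_all
  qed
  have c1: "\<phi> ` TM \<subseteq> TN" by (rule tors_max[OF TC FD PT S(2) TNp c1b c1c])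
  have c2: "strict_mor G (restr M TM) (restr N TN) \<phi>" unfolding strict_mor_def
  proof (intro conjI)
    show "restr M TM \<in> G" by (rule strictD(2)[OF TMs])
    show "restr N TN \<in> G" by (rule strictD(2)[OF TNs])
    show "hom (restr M TM) (restr N TN) \<phi>" by (rule hom_restr[OF S(3) TMC]) (use c1 in blast)
    have "kern (restr M TM) (restr N TN) \<phi> = ?K \<inter> TM" using TMC unfolding kern_def by auto
    moreover have "strict_sub G (restr M TM) (?K \<inter> TM)" by (rule strict_Int[OF Ks STM strictD(2)[OF TMs]])
    ultimately show "strict_sub G (restr M TM) (kern (restr M TM) (restr N TN) \<phi>)" by simp
    have "strict_sub G (restr N TN) (\<phi> ` TM \<inter> TN)" by (rule strict_Int[OF c1b STN strictD(2)[OF TNs]])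
    moreover have "\<phi> ` TM \<inter> TN = \<phi> ` TM" using c1 by blast
    ultimately show "strict_sub G (restr N TN) (\<phi> ` mcarr (restr M TM))" by simp
  qed
  have c3: "\<exists>\<psi>. strict_mor G FM FN \<psi> \<and> (\<forall>x\<in>mcarr M. \<psi> (qM x) = qN (\<phi> x))"
    if a: "modlam FM \<and> quot_map M FM qM TM \<and> modlam FN \<and> quot_map N FN qN TN" for FM FN qM qN
  proof -
    have HFM: "modlam FM" and qmM: "quot_map M FM qM TM" and HFN: "modlam FN" and qmN: "quot_map N FN qN TN"
      using a by simp_all
    have RFM: "rmodule FM" using HFM unfolding modlam_def by simp
    have RFN: "rmodule FN" using HFN unfolding modlam_def by simp
    note QM = quot_mapD[OF qmM] and QN = quot_mapD[OF qmN]
    define \<psi> where "\<psi> y = qN (\<phi> (SOME x. x \<in> mcarr M \<and> qM x = y))" for y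
    have key: "\<psi> (qM x) = qN (\<phi> x)" if x: "x \<in> mcarr M" for x
    proof -
      define x' where "x' = (SOME z. z \<in> mcarr M \<and> qM z = qM x)"
      have "x' \<in> mcarr M \<and> qM x' = qM x" unfolding x'_def
        by (rule someI[of "\<lambda>z. z \<in> mcarr M \<and> qM z = qM x" x]) (simp add: x)
      then have x': "x' \<in> mcarr M" "qM x = qM x'" by simp_all
      have "madd M x (mact M x' (-1)) \<in> kern M FM qM"
        using hom_eq_iff[OF RM RFM QM(1) x x'(1)] x'(2) by simp
      then have "madd M x (mact M x' (-1)) \<in> TM" using QM(3) by simp
      then have "\<phi> (madd M x (mact M x' (-1))) \<in> TN" using c1 by blast
      moreover have "\<phi> (madd M x (mact M x' (-1))) = madd N (\<phi> x) (mact N (\<phi> x') (-1))"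
        using homD(2,3)[OF S(3)] x x'(1) rs[OF RM] by simp
      ultimately have "madd N (\<phi> x) (mact N (\<phi> x') (-1)) \<in> kern N FN qN" using QN(3) by simp
      then have "qN (\<phi> x) = qN (\<phi> x')"
        using hom_eq_iff[OF RN RFN QN(1) homD(1)[OF S(3) x] homD(1)[OF S(3) x'(1)]] by simp
      then show ?thesis unfolding \<psi>_def x'_def by simp
    qed
    have exq: "\<exists>x\<in>mcarr M. y = qM x" if "y \<in> mcarr FM" for y using that QM(2) by auto
    have hpsi: "hom FM FN \<psi>"
    proof (rule homI)
      fix y assume "y \<in> mcarr FM"
      then obtain x where x: "x \<in> mcarr M" "y = qM x" using exq by blast
      have "qN (\<phi> x) \<in> mcarr FN" using homD(1)[OF QN(1) homD(1)[OF S(3) x(1)]] .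
      then show "\<psi> y \<in> mcarr FN" using key[OF x(1)] x(2) by simp
    next
      fix y1 y2 assume yy: "y1 \<in> mcarr FM" "y2 \<in> mcarr FM"
      obtain x1 where x1: "x1 \<in> mcarr M" "y1 = qM x1" using exq[OF yy(1)] by blast
      obtain x2 where x2: "x2 \<in> mcarr M" "y2 = qM x2" using exq[OF yy(2)] by blast
      note x = x1 x2
      have "madd FM y1 y2 = qM (madd M x1 x2)" using homD(2)[OF QM(1) x(1) x(3)] x(2,4) by simp
      then have "\<psi> (madd FM y1 y2) = qN (\<phi> (madd M x1 x2))" using key ra[OF RM x(1) x(3)] by simp
      also have "\<dots> = madd FN (qN (\<phi> x1)) (qN (\<phi> x2))"
        using homD(2)[OF S(3) x(1) x(3)] homD(2)[OF QN(1) homD(1)[OF S(3) x(1)] homD(1)[OF S(3) x(3)]] by simp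
      finally show "\<psi> (madd FM y1 y2) = madd FN (\<psi> y1) (\<psi> y2)" using key x by simp
    next
      fix y r assume "y \<in> mcarr FM"
      then obtain x where x: "x \<in> mcarr M" "y = qM x" using exq by blast
      have "mact FM y r = qM (mact M x r)" using homD(3)[OF QM(1) x(1)] x(2) by simp
      then have "\<psi> (mact FM y r) = qN (\<phi> (mact M x r))" using key rs[OF RM x(1)] by simp
      also have "\<dots> = mact FN (qN (\<phi> x)) r"
        using homD(3)[OF S(3) x(1)] homD(3)[OF QN(1) homD(1)[OF S(3) x(1)]] by simp
      finally show "\<psi> (mact FM y r) = mact FN (\<psi> y) r" using key x by simp
    qed
    let ?W = "{x \<in> mcarr M. \<phi> x \<in> TN}"
    have TNI: "strict_sub G (restr N ?I) (TN \<inter> ?I)" by (rule strict_Int[OF TNs SI strictD(2)[OF Is]])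
    have "strict_sub G M {x \<in> mcarr M. \<phi> x \<in> TN \<inter> ?I}"
      by (rule strict_preimage[OF TC FD HM HI qI Ks TNI])
    moreover have "{x \<in> mcarr M. \<phi> x \<in> TN \<inter> ?I} = ?W" by auto
    ultimately have Ws: "strict_sub G M ?W" by simp
    have kpsi: "kern FM FN \<psi> = qM ` ?W"
    proof
      show "kern FM FN \<psi> \<subseteq> qM ` ?W"
      proof
        fix y assume y: "y \<in> kern FM FN \<psi>"
        then have "y \<in> mcarr FM" unfolding kern_def by simp
        then obtain x where x: "x \<in> mcarr M" "y = qM x" using exq by blast
        have "qN (\<phi> x) = mzero FN" using y key[OF x(1)] x(2) unfolding kern_def by simp
        then have "\<phi> x \<in> kern N FN qN" using homD(1)[OF S(3) x(1)] unfolding kern_def by simp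
        then have "x \<in> ?W" using QN(3) x(1) by simp
        then show "y \<in> qM ` ?W" using x(2) by blast
      qed
      show "qM ` ?W \<subseteq> kern FM FN \<psi>"
      proof
        fix y assume "y \<in> qM ` ?W"
        then obtain x where x: "x \<in> ?W" "y = qM x" by blast
        have "\<phi> x \<in> kern N FN qN" using x(1) QN(3) by simp
        then have "qN (\<phi> x) = mzero FN" unfolding kern_def by simp
        moreover have "y \<in> mcarr FM" using x homD(1)[OF QM(1)] by simp
        ultimately show "y \<in> kern FM FN \<psi>" using key x unfolding kern_def by simp
      qed
    qed
    have ipsi: "\<psi> ` mcarr FM = qN ` ?I"
    proof
      show "\<psi> ` mcarr FM \<subseteq> qN ` ?I"
      proof
        fix z assume "z \<in> \<psi> ` mcarr FM"
        then obtain y where y: "y \<in> mcarr FM" "z = \<psi> y" by blast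
        then obtain x where x: "x \<in> mcarr M" "y = qM x" using exq by blast
        then show "z \<in> qN ` ?I" using y(2) key by simp
      qed
      show "qN ` ?I \<subseteq> \<psi> ` mcarr FM"
      proof
        fix z assume "z \<in> qN ` ?I"
        then obtain x where x: "x \<in> mcarr M" "z = qN (\<phi> x)" by blast
        have "qM x \<in> mcarr FM" using homD(1)[OF QM(1) x(1)] .
        moreover have "z = \<psi> (qM x)" using key[OF x(1)] x(2) by simp
        ultimately show "z \<in> \<psi> ` mcarr FM" by blast
      qed
    qed
    have FMG: "FM \<in> G"
    proof -
      have "restr FM (qM ` mcarr M) \<in> G"
        by (rule QUO[OF TC FD HM HFM QM(1) submod_carr[OF RM]]) (use S(1) in simp)
      then show ?thesis using QM(2) by simp
    qed
    have FNG: "FN \<in> G"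
    proof -
      have "restr FN (qN ` mcarr N) \<in> G"
        by (rule QUO[OF TC FD HN HFN QN(1) submod_carr[OF RN]]) (use S(2) in simp)
      then show ?thesis using QN(2) by simp
    qed
    have "strict_mor G FM FN \<psi>" unfolding strict_mor_def
    proof (intro conjI FMG FNG hpsi)
      have "strict_sub G FM (qM ` ?W)"
        by (rule strict_image[OF TC FD HM HFM qmM strictD(2)[OF TMs] Ws])
      then show "strict_sub G FM (kern FM FN \<psi>)" using kpsi by simp
      have "strict_sub G FN (qN ` ?I)"
        by (rule strict_image[OF TC FD HN HFN qmN strictD(2)[OF TNs] Is])
      then show "strict_sub G FN (\<psi> ` mcarr FM)" using ipsi by simp
    qed
    then show ?thesis using key by blast
  qed
  show ?thesis
    apply (intro conjI c1 c2 allI impI)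
    apply (erule c3)
    done
qed

lemma part1b:
  assumes M: "M \<in> G" and TP: "tors_part G P (perp G P) M T" and HF: "modlam F" and qm: "quot_map M F q T"
  shows "strict_exact G (restr M T) M F id q"
proof -
  have HM: "modlam M" by (rule tc_modlam[OF TC M])
  have RM: "rmodule M" using HM unfolding modlam_def by simp
  note Q = quot_mapD[OF qm]
  have Ts: "strict_sub G M T" by (rule tors_partD(1)[OF TP])
  have TC': "T \<subseteq> mcarr M" by (rule submodD(1)[OF strictD(1)[OF Ts]])
  have FG: "F \<in> G"
  proof -
    have "restr F (q ` mcarr M) \<in> G"
      by (rule QUO[OF TC FD HM HF Q(1) submod_carr[OF RM]]) (use M in simp)
    then show ?thesis using Q(2) by simp
  qed
  show ?thesis unfolding strict_exact_def
  proof (intro conjI M FG Q(1) Q(2))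
    show "restr M T \<in> G" by (rule strictD(2)[OF Ts])
    show "hom (restr M T) M id" using TC' by (intro homI) auto
    show "inj_on id (mcarr (restr M T))" by simp
    show "id ` mcarr (restr M T) = kern M F q" using Q(3) by simp
    show "strict_sub G M (id ` mcarr (restr M T))" using Ts by simp
  qed
qed

end

theorem mainTheorem9:
  fixes \<iota> :: "'k::field \<Rightarrow> 'r::ring_1"
    and G P Q :: "'r umod set"
  assumes "fd_algebra \<iota>"
    and "torsion_class G"
    and "pseudo_torsion G P"
    and "Q = perp G P"
  shows "(\<forall>M\<in>G. (\<exists>!T. tors_part G P Q M T) \<and>
            (\<forall>T F q. tors_part G P Q M T \<and> modlam F \<and> quot_map M F q T
               \<longrightarrow> strict_exact G (restr M T) M F id q))
       \<and> (\<forall>M N \<phi>. strict_mor G M N \<phi> \<longrightarrow>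
            (\<forall>TM TN. tors_part G P Q M TM \<and> tors_part G P Q N TN \<longrightarrow>
               \<phi> ` TM \<subseteq> TN \<and>
               strict_mor G (restr M TM) (restr N TN) \<phi> \<and>
               (\<forall>FM FN qM qN. modlam FM \<and> quot_map M FM qM TM \<and> modlam FN \<and> quot_map N FN qN TN
                  \<longrightarrow> (\<exists>\<psi>. strict_mor G FM FN \<psi> \<and> (\<forall>x\<in>mcarr M. \<psi> (qM x) = qN (\<phi> x))))))"
proof -
  note TC = assms(2) and FD = assms(1) and PT = assms(3) and QP = assms(4)
  have A: "(\<exists>!T. tors_part G P Q M T) \<and>
            (\<forall>T F q. tors_part G P Q M T \<and> modlam F \<and> quot_map M F q T
               \<longrightarrow> strict_exact G (restr M T) M F id q)" if M: "M \<in> G" for M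
  proof (intro conjI allI impI)
    obtain T where T: "tors_part G P (perp G P) M T" using tors_exists[OF TC FD PT M] by blast
    show "\<exists>!T. tors_part G P Q M T"
    proof (rule ex1I[of _ T])
      show "tors_part G P Q M T" using T QP by simp
      fix T' assume "tors_part G P Q M T'"
      then have "tors_part G P (perp G P) M T'" using QP by simp
      then show "T' = T" by (rule tors_unique[OF TC FD PT M _ T])
    qed
    fix T F q assume a: "tors_part G P Q M T \<and> modlam F \<and> quot_map M F q T"
    then have "tors_part G P (perp G P) M T" "modlam F" "quot_map M F q T" using QP by simp_all
    then show "strict_exact G (restr M T) M F id q" by (rule part1b[OF TC FD PT M])
  qed
  have B: "\<phi> ` TM \<subseteq> TN \<and>
               strict_mor G (restr M TM) (restr N TN) \<phi> \<and>
               (\<forall>FM FN qM qN. modlam FM \<and> quot_map M FM qM TM \<and> modlam FN \<and> quot_map N FN qN TN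
                  \<longrightarrow> (\<exists>\<psi>. strict_mor G FM FN \<psi> \<and> (\<forall>x\<in>mcarr M. \<psi> (qM x) = qN (\<phi> x))))"
    if sm: "strict_mor G M N \<phi>" and tt: "tors_part G P Q M TM \<and> tors_part G P Q N TN" for M N \<phi> TM TN
  proof -
    have "tors_part G P (perp G P) M TM" "tors_part G P (perp G P) N TN" using tt QP by simp_all
    then show ?thesis by (rule part2[OF TC FD PT sm])
  qed
  show ?thesis
  proof (rule conjI)
    show "\<forall>M\<in>G. (\<exists>!T. tors_part G P Q M T) \<and>
            (\<forall>T F q. tors_part G P Q M T \<and> modlam F \<and> quot_map M F q T
               \<longrightarrow> strict_exact G (restr M T) M F id q)"
      by (intro ballI) (rule A)
    show "\<forall>M N \<phi>. strict_mor G M N \<phi> \<longrightarrow>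
            (\<forall>TM TN. tors_part G P Q M TM \<and> tors_part G P Q N TN \<longrightarrow>
               \<phi> ` TM \<subseteq> TN \<and>
               strict_mor G (restr M TM) (restr N TN) \<phi> \<and>
               (\<forall>FM FN qM qN. modlam FM \<and> quot_map M FM qM TM \<and> modlam FN \<and> quot_map N FN qN TN
                  \<longrightarrow> (\<exists>\<psi>. strict_mor G FM FN \<psi> \<and> (\<forall>x\<in>mcarr M. \<psi> (qM x) = qN (\<phi> x)))))"
      by (intro allI impI) (rule B)
  qed
qed

end
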